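(* Let $T$ be a tree with positive edge weights rooted at the homebase $r$, in which no vertex other than $r$ has exactly one child, and let $q\ge 0$. Compute labels $\Lambda_v=(\Lambda_v.k,\Lambda_v.u_l,\Lambda_v.u_c)$ for all $v$ recursively from the leaves up: for a leaf $v$, $\Lambda_v=(1,v,\mathrm{null})$; for a non-leaf $v$, with $d_r=d(r,v)+q$, $\Lambda_v.k=\max\{1,\sum_{u\in c(v)}(\Lambda_u.k-\mathbb{1}[\Lambda_u.k=1\text{ and }d(v,\Lambda_u.u_l)\le d_r])\}$, $\Lambda_v.u_c$ is a child $u$ of $v$ maximizing $d(v,\Lambda_u.u_l)$, and $\Lambda_v.u_l=\Lambda_{\Lambda_v.u_c}.u_l$. Then build the strategy $\mathcal{S}$ (procedure CostExpl) recursively: first invoke $\Lambda_r.k$ agents at $r$; at a non-leaf vertex $v$ (with agents present at $v$), order its children as $c_1,\dots,c_l$ with $c_l=\Lambda_v.u_c$ (the others in arbitrary order), and for $i=1,\dots,l$: move $\Lambda_{c_i}.k$ agents from $v$ along $(v,c_i)$, apply the construction recursively at $c_i$, and then, if $c_i\ne\Lambda_v.u_c$ and $d(v,\Lambda_{c_i}.u_l)\le d(r,v)+q$, send the agent located at $\Lambda_{c_i}.u_l$ back to $v$. Then $\mathcal{S}$ explores $T$ and is cost-optimal.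
   Context: Exploration model: given a connected graph with positive edge weights, a homebase vertex, and invoking cost $q\ge 0$, a strategy is a sequence of moves, each either invoking a new agent (appearing at the homebase) or an agent traversing an edge incident to its current vertex. A vertex is explored when first visited; the strategy explores the graph when every vertex has been visited by some agent (agents need not return). With $k$ agents, agent $i$ traversing total distance $d_i$ (weights counted with multiplicity), the cost is $kq+\sum_i d_i$; a strategy is cost-optimal if it explores the graph with minimum cost (off-line setting). For the rooted tree: $c(v)$ is the set of children of $v$, a leaf is a non-root vertex with no children, and $d(\cdot,\cdot)$ is weighted distance. *)

theory Defs
  imports Complex_Main
begin

text \<open>A move either invokes a new agent (appearing at the homebase) or lets
  agent number i (agents are numbered 0,1,... in order of invocation) traverse
  the edge from its current vertex to the vertex y.\<close>
datatype 'v move = Invoke | Move nat 'v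

text \<open>Configuration = list of current agent positions.\<close>
fun step :: "'v \<Rightarrow> 'v list \<Rightarrow> 'v move \<Rightarrow> 'v list" where
  "step h pos Invoke = pos @ [h]"
| "step h pos (Move i y) = pos[i := y]"

definition run :: "'v \<Rightarrow> 'v list \<Rightarrow> 'v move list \<Rightarrow> 'v list" where
  "run h pos ms = foldl (step h) pos ms"

fun valid_moves :: "('v \<Rightarrow> 'v \<Rightarrow> bool) \<Rightarrow> 'v \<Rightarrow> 'v list \<Rightarrow> 'v move list \<Rightarrow> bool" where
  "valid_moves adj h pos [] = True"
| "valid_moves adj h pos (Invoke # ms) = valid_moves adj h (step h pos Invoke) ms"
| "valid_moves adj h pos (Move i y # ms) =
     (i < length pos \<and> adj (pos ! i) y \<and> valid_moves adj h (step h pos (Move i y)) ms)"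

fun visited :: "'v \<Rightarrow> 'v list \<Rightarrow> 'v move list \<Rightarrow> 'v set" where
  "visited h pos [] = set pos"
| "visited h pos (m # ms) = set pos \<union> visited h (step h pos m) ms"

fun move_cost :: "('v \<Rightarrow> 'v \<Rightarrow> real) \<Rightarrow> real \<Rightarrow> 'v \<Rightarrow> 'v list \<Rightarrow> 'v move list \<Rightarrow> real" where
  "move_cost wt q h pos [] = 0"
| "move_cost wt q h pos (Invoke # ms) = q + move_cost wt q h (step h pos Invoke) ms"
| "move_cost wt q h pos (Move i y # ms) = wt (pos ! i) y + move_cost wt q h (step h pos (Move i y)) ms"

definition explores :: "'v set \<Rightarrow> ('v \<Rightarrow> 'v \<Rightarrow> bool) \<Rightarrow> 'v \<Rightarrow> 'v move list \<Rightarrow> bool" where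
  "explores V adj h S \<longleftrightarrow> valid_moves adj h [] S \<and> V \<subseteq> visited h [] S"

definition cost :: "('v \<Rightarrow> 'v \<Rightarrow> real) \<Rightarrow> real \<Rightarrow> 'v \<Rightarrow> 'v move list \<Rightarrow> real" where
  "cost wt q h S = move_cost wt q h [] S"

definition cost_optimal ::
  "'v set \<Rightarrow> ('v \<Rightarrow> 'v \<Rightarrow> bool) \<Rightarrow> ('v \<Rightarrow> 'v \<Rightarrow> real) \<Rightarrow> real \<Rightarrow> 'v \<Rightarrow> 'v move list \<Rightarrow> bool" where
  "cost_optimal V adj wt q h S \<longleftrightarrow>
     explores V adj h S \<and> (\<forall>S'. explores V adj h S' \<longrightarrow> cost wt q h S \<le> cost wt q h S')"

definition is_walk :: "('v \<Rightarrow> 'v \<Rightarrow> bool) \<Rightarrow> 'v list \<Rightarrow> bool" where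
  "is_walk adj xs \<longleftrightarrow> xs \<noteq> [] \<and> (\<forall>i < length xs - 1. adj (xs ! i) (xs ! Suc i))"

definition walk_weight :: "('v \<Rightarrow> 'v \<Rightarrow> real) \<Rightarrow> 'v list \<Rightarrow> real" where
  "walk_weight wt xs = (\<Sum>i < length xs - 1. wt (xs ! i) (xs ! Suc i))"

definition gdist :: "('v \<Rightarrow> 'v \<Rightarrow> bool) \<Rightarrow> ('v \<Rightarrow> 'v \<Rightarrow> real) \<Rightarrow> 'v \<Rightarrow> 'v \<Rightarrow> real" where
  "gdist adj wt x y = Inf {walk_weight wt xs | xs. is_walk adj xs \<and> hd xs = x \<and> last xs = y}"

text \<open>The tree has vertex set V, root r, and every non-root vertex v has
  parent par v; the edge {v, par v} has weight w v.\<close>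
definition rooted_tree :: "'v set \<Rightarrow> 'v \<Rightarrow> ('v \<Rightarrow> 'v) \<Rightarrow> bool" where
  "rooted_tree V r par \<longleftrightarrow> finite V \<and> r \<in> V \<and>
     (\<forall>v \<in> V - {r}. par v \<in> V) \<and> (\<forall>v \<in> V. \<exists>n. (par ^^ n) v = r)"

definition tadj :: "'v set \<Rightarrow> 'v \<Rightarrow> ('v \<Rightarrow> 'v) \<Rightarrow> 'v \<Rightarrow> 'v \<Rightarrow> bool" where
  "tadj V r par x y \<longleftrightarrow> x \<in> V \<and> y \<in> V \<and>
     ((x \<noteq> r \<and> par x = y) \<or> (y \<noteq> r \<and> par y = x))"

definition twt :: "'v \<Rightarrow> ('v \<Rightarrow> 'v) \<Rightarrow> ('v \<Rightarrow> real) \<Rightarrow> 'v \<Rightarrow> 'v \<Rightarrow> real" where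
  "twt r par w x y = (if x \<noteq> r \<and> par x = y then w x else w y)"

definition children :: "'v set \<Rightarrow> 'v \<Rightarrow> ('v \<Rightarrow> 'v) \<Rightarrow> 'v \<Rightarrow> 'v set" where
  "children V r par v = {u \<in> V. u \<noteq> r \<and> par u = v}"

definition is_leaf :: "'v set \<Rightarrow> 'v \<Rightarrow> ('v \<Rightarrow> 'v) \<Rightarrow> 'v \<Rightarrow> bool" where
  "is_leaf V r par v \<longleftrightarrow> v \<in> V \<and> v \<noteq> r \<and> children V r par v = {}"

text \<open>Labels: lk v = Lambda_v.k, lul v = Lambda_v.u_l, luc v = Lambda_v.u_c
  (None = null).  The recursive definition leaves only the choice of the
  maximising child open, so we quantify over all labelings satisfying the
  defining equations at every vertex.\<close>
definition valid_labels ::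
  "'v set \<Rightarrow> 'v \<Rightarrow> ('v \<Rightarrow> 'v) \<Rightarrow> ('v \<Rightarrow> real) \<Rightarrow> real \<Rightarrow>
   ('v \<Rightarrow> nat) \<Rightarrow> ('v \<Rightarrow> 'v) \<Rightarrow> ('v \<Rightarrow> 'v option) \<Rightarrow> bool" where
  "valid_labels V r par w q lk lul luc \<longleftrightarrow>
    (\<forall>v \<in> V.
      (is_leaf V r par v \<longrightarrow> lk v = 1 \<and> lul v = v \<and> luc v = None) \<and>
      (\<not> is_leaf V r par v \<longrightarrow>
         lk v = max 1 (\<Sum>u \<in> children V r par v.
                   lk u - (if lk u = 1 \<and>
                              gdist (tadj V r par) (twt r par w) v (lul u)
                                \<le> gdist (tadj V r par) (twt r par w) r v + q
                           then 1 else 0)) \<and>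
         (children V r par v \<noteq> {} \<longrightarrow>
            (\<exists>u \<in> children V r par v. luc v = Some u \<and> lul v = lul u \<and>
               (\<forall>u' \<in> children V r par v.
                  gdist (tadj V r par) (twt r par w) v (lul u')
                    \<le> gdist (tadj V r par) (twt r par w) v (lul u))))))"

text \<open>costexpl v pos S: starting in configuration pos (agents present at v),
  running the construction at v produces the move sequence S.
  cexpl_loop v cs pos S: processing the (remaining) ordered children cs of v.\<close>
inductive costexpl and cexpl_loop
  for V :: "'v set" and r :: 'v and par :: "'v \<Rightarrow> 'v" and w :: "'v \<Rightarrow> real" and q :: real
  and lk :: "'v \<Rightarrow> nat" and lul :: "'v \<Rightarrow> 'v" and luc :: "'v \<Rightarrow> 'v option"
where
  ce_node: "\<lbrakk> distinct cs; set cs = children V r par v;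
             cs \<noteq> [] \<longrightarrow> luc v = Some (last cs);
             cexpl_loop V r par w q lk lul luc v cs pos S \<rbrakk>
           \<Longrightarrow> costexpl V r par w q lk lul luc v pos S"
| ce_nil: "cexpl_loop V r par w q lk lul luc v [] pos []"
| ce_cons: "\<lbrakk> distinct I; length I = lk c;
             \<forall>i \<in> set I. i < length pos \<and> pos ! i = v;
             M = map (\<lambda>i. Move i c) I;
             costexpl V r par w q lk lul luc c (run r pos M) R;
             if Some c \<noteq> luc v \<and>
                gdist (tadj V r par) (twt r par w) v (lul c)
                  \<le> gdist (tadj V r par) (twt r par w) r v + q
             then (\<exists>j n. j < length (run r pos (M @ R)) \<and>
                         run r pos (M @ R) ! j = lul c \<and>
                         (par ^^ n) (lul c) = v \<and> (\<forall>m < n. (par ^^ m) (lul c) \<noteq> v) \<and>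
                         B = map (\<lambda>i. Move j ((par ^^ i) (lul c))) [1..<Suc n])
             else B = [];
             cexpl_loop V r par w q lk lul luc v cs (run r pos (M @ R @ B)) S \<rbrakk>
           \<Longrightarrow> cexpl_loop V r par w q lk lul luc v (c # cs) pos (M @ R @ B @ S)"

end

theory Submission
  imports Defs
begin

locale tctx =
  fixes V :: "'v set" and r :: 'v and par :: "'v \<Rightarrow> 'v" and w :: "'v \<Rightarrow> real"
  assumes tree: "rooted_tree V r par"
    and pos_w: "\<forall>v \<in> V - {r}. w v > 0"
begin

definition ht :: "'v \<Rightarrow> nat" where "ht x = (LEAST n. (par ^^ n) x = r)"

lemma finV: "finite V" and rV: "r \<in> V" and parV: "v \<in> V \<Longrightarrow> v \<noteq> r \<Longrightarrow> par v \<in> V"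
  and reach: "v \<in> V \<Longrightarrow> \<exists>n. (par ^^ n) v = r"
  using tree unfolding rooted_tree_def by auto

lemma ht_spec: "x \<in> V \<Longrightarrow> (par ^^ ht x) x = r"
  unfolding ht_def using reach by (meson LeastI_ex)

lemma ht_le: "(par ^^ n) x = r \<Longrightarrow> ht x \<le> n"
  unfolding ht_def by (rule Least_le)

lemma ht_0: "x \<in> V \<Longrightarrow> ht x = 0 \<longleftrightarrow> x = r"
  using ht_spec ht_le[of 0 x] by fastforce

lemma ht_r: "ht r = 0"
  using ht_le[of 0 r] by simp

lemma ht_par: assumes "x \<in> V" "x \<noteq> r" shows "ht x = Suc (ht (par x))"
proof -
  have px: "par x \<in> V" using assms parV by auto
  have h0: "ht x \<noteq> 0" using ht_0 assms by auto
  then obtain m where m: "ht x = Suc m" by (cases "ht x") auto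
  have "(par ^^ m) (par x) = r" using ht_spec[OF assms(1)] m by (simp add: funpow_swap1)
  hence "ht (par x) \<le> m" by (rule ht_le)
  moreover have "(par ^^ Suc (ht (par x))) x = r" using ht_spec[OF px] by (simp add: funpow_swap1)
  hence "ht x \<le> Suc (ht (par x))" by (rule ht_le)
  ultimately show ?thesis using m by simp
qed

lemma iter_V: "x \<in> V \<Longrightarrow> n \<le> ht x \<Longrightarrow> (par ^^ n) x \<in> V \<and> ht ((par ^^ n) x) = ht x - n"
proof (induction n)
  case 0 then show ?case by simp
next
  case (Suc n)
  then have IH: "(par ^^ n) x \<in> V" "ht ((par ^^ n) x) = ht x - n" by auto
  have ne: "(par ^^ n) x \<noteq> r"
  proof
    assume "(par ^^ n) x = r"
    then have "ht ((par ^^ n) x) = 0" by (simp add: ht_r)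
    with IH(2) Suc.prems show False by simp
  qed
  show ?case using parV[OF IH(1) ne] ht_par[OF IH(1) ne] IH(2) Suc.prems by simp
qed

lemma iter_ne_r: "x \<in> V \<Longrightarrow> n < ht x \<Longrightarrow> (par ^^ n) x \<noteq> r"
  using iter_V[of x n] ht_0 by force

lemma par_ne: "x \<in> V \<Longrightarrow> x \<noteq> r \<Longrightarrow> par x \<noteq> x"
  using ht_par by force

lemma no_2cycle: assumes "x \<in> V" "x \<noteq> r" "y \<noteq> r" "par x = y" shows "par y \<noteq> x"
proof
  assume "par y = x"
  have "y \<in> V" using parV assms by auto
  have "ht x = Suc (ht y)" using ht_par[OF assms(1,2)] assms(4) by simp
  moreover have "ht y = Suc (ht x)" using ht_par[OF \<open>y \<in> V\<close> assms(3)] \<open>par y = x\<close> by simp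
  ultimately show False by simp
qed

definition desc :: "'v \<Rightarrow> 'v \<Rightarrow> bool" where
  "desc x v \<longleftrightarrow> x \<in> V \<and> (\<exists>n \<le> ht x. (par ^^ n) x = v)"

lemma desc_V: "desc x v \<Longrightarrow> x \<in> V \<and> v \<in> V"
  unfolding desc_def using iter_V by blast

lemma desc_ht: assumes "desc x v" "(par ^^ n) x = v" "n \<le> ht x" shows "ht v = ht x - n"
  using iter_V assms desc_V by blast

lemma desc_ht_le: "desc x v \<Longrightarrow> ht v \<le> ht x"
  unfolding desc_def using iter_V by fastforce

lemma desc_refl: "x \<in> V \<Longrightarrow> desc x x"
  unfolding desc_def by (rule conjI, simp, rule exI[of _ 0], simp)

lemma desc_root: "x \<in> V \<Longrightarrow> desc x r"
  unfolding desc_def using ht_spec by blast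

lemma desc_step: assumes "x \<in> V" "x \<noteq> r" shows "desc x v \<longleftrightarrow> x = v \<or> desc (par x) v"
proof
  assume "desc x v"
  then obtain n where n: "n \<le> ht x" "(par ^^ n) x = v" unfolding desc_def by auto
  show "x = v \<or> desc (par x) v"
  proof (cases n)
    case 0 then show ?thesis using n by simp
  next
    case (Suc m)
    have "(par ^^ m) (par x) = v" using n Suc by (simp add: funpow_swap1)
    moreover have "m \<le> ht (par x)" using n Suc ht_par[OF assms] by simp
    ultimately show ?thesis unfolding desc_def using parV[OF assms] by blast
  qed
next
  assume "x = v \<or> desc (par x) v"
  then show "desc x v"
  proof
    assume "x = v" then show ?thesis using desc_refl assms by simp
  next
    assume "desc (par x) v"
    then obtain n where n: "n \<le> ht (par x)" "(par ^^ n) (par x) = v" unfolding desc_def by auto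
    have "(par ^^ Suc n) x = v" using n by (simp add: funpow_swap1)
    moreover have "Suc n \<le> ht x" using n ht_par[OF assms] by simp
    ultimately show ?thesis unfolding desc_def using assms by blast
  qed
qed

lemma desc_trans: assumes "desc x u" "desc u v" shows "desc x v"
proof -
  obtain a where a: "a \<le> ht x" "(par ^^ a) x = u" using assms(1) unfolding desc_def by auto
  obtain b where b: "b \<le> ht u" "(par ^^ b) u = v" using assms(2) unfolding desc_def by auto
  have hu: "ht u = ht x - a" using desc_ht[OF assms(1) a(2) a(1)] .
  have "(par ^^ (b + a)) x = v" using a b by (simp add: funpow_add)
  moreover have "b + a \<le> ht x" using hu b a by simp
  ultimately show ?thesis using desc_V[OF assms(1)] unfolding desc_def by blast
qed

lemma desc_antisym: assumes "desc x v" "desc v x" shows "x = v"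
proof -
  obtain a where a: "a \<le> ht x" "(par ^^ a) x = v" using assms(1) unfolding desc_def by auto
  have "ht v = ht x - a" using desc_ht[OF assms(1) a(2) a(1)] .
  moreover have "ht x \<le> ht v" using desc_ht_le[OF assms(2)] .
  ultimately have "a = 0" using a by simp
  then show ?thesis using a by simp
qed

lemma desc_r: "desc r v \<Longrightarrow> v = r"
  using desc_antisym desc_root desc_V by blast

lemma desc_same_ht: assumes "desc x c1" "desc x c2" "ht c1 = ht c2" shows "c1 = c2"
proof -
  obtain a where a: "a \<le> ht x" "(par ^^ a) x = c1" using assms(1) unfolding desc_def by auto
  obtain b where b: "b \<le> ht x" "(par ^^ b) x = c2" using assms(2) unfolding desc_def by auto
  have "ht c1 = ht x - a" "ht c2 = ht x - b" using desc_ht assms a b by auto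
  hence "a = b" using a b assms(3) by simp
  then show ?thesis using a b by simp
qed

definition ch :: "'v \<Rightarrow> 'v set" where "ch v = children V r par v"

lemma ch_iff: "c \<in> ch v \<longleftrightarrow> c \<in> V \<and> c \<noteq> r \<and> par c = v"
  unfolding ch_def children_def by auto

lemma ch_fin: "finite (ch v)"
  using finV unfolding ch_def children_def by auto

lemma ch_desc: "c \<in> ch v \<Longrightarrow> desc c v \<and> c \<noteq> v \<and> ht c = Suc (ht v) \<and> v \<in> V"
  using ch_iff desc_step desc_refl parV par_ne ht_par by metis

lemma desc_ch_ex: assumes "desc x v" "x \<noteq> v" shows "\<exists>c \<in> ch v. desc x c"
proof -
  obtain n where n: "n \<le> ht x" "(par ^^ n) x = v" using assms(1) unfolding desc_def by auto
  have xV: "x \<in> V" using desc_V assms by auto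
  obtain m where m: "n = Suc m" using n assms(2) by (cases n) auto
  let ?c = "(par ^^ m) x"
  have cV: "?c \<in> V" using iter_V xV n m by simp
  have cr: "?c \<noteq> r" using iter_ne_r xV n m by simp
  have "par ?c = v" using n m by simp
  hence "?c \<in> ch v" using cV cr ch_iff by simp
  moreover have "desc x ?c" unfolding desc_def using xV n m by (intro conjI exI[of _ m]) auto
  ultimately show ?thesis by blast
qed

lemma ch_unique: "c1 \<in> ch v \<Longrightarrow> c2 \<in> ch v \<Longrightarrow> desc x c1 \<Longrightarrow> desc x c2 \<Longrightarrow> c1 = c2"
  using ch_desc desc_same_ht by metis

lemma ch_not_desc: "c \<in> ch v \<Longrightarrow> \<not> desc v c"
  using ch_desc desc_antisym by metis

definition sub :: "'v \<Rightarrow> 'v set" where "sub v = {x. desc x v}"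

lemma sub_fin: "finite (sub v)"
  using finV desc_V unfolding sub_def by (metis (no_types, lifting) mem_Collect_eq rev_finite_subset subsetI)

lemma sub_decomp: assumes "v \<in> V" shows "sub v - {v} = (\<Union>c \<in> ch v. sub c)"
  using desc_ch_ex ch_desc desc_trans ch_not_desc unfolding sub_def by (auto, metis)

lemma sub_disj: "c1 \<in> ch v \<Longrightarrow> c2 \<in> ch v \<Longrightarrow> c1 \<noteq> c2 \<Longrightarrow> sub c1 \<inter> sub c2 = {}"
  unfolding sub_def using ch_unique by auto

lemma sub_r: "sub r = V"
  unfolding sub_def using desc_root desc_V by auto

definition D :: "'v \<Rightarrow> real" where "D x = (\<Sum>i < ht x. w ((par ^^ i) x))"

lemma D_r: "D r = 0" unfolding D_def ht_r by simp

lemma D_par: assumes "x \<in> V" "x \<noteq> r" shows "D x = w x + D (par x)"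
  unfolding D_def ht_par[OF assms] sum.lessThan_Suc_shift by (simp add: funpow_swap1)

lemma w_pos: "x \<in> V \<Longrightarrow> x \<noteq> r \<Longrightarrow> w x > 0" using pos_w by auto

lemma ht_induct[consumes 1, case_names step]: assumes "x \<in> V" and "\<And>x. x \<in> V \<Longrightarrow> (\<And>y. y \<in> V \<Longrightarrow> ht y < ht x \<Longrightarrow> P y) \<Longrightarrow> P x"
  shows "P x"
  using assms(1)
proof (induction "ht x" arbitrary: x rule: less_induct)
  case less then show ?case using assms(2) by blast
qed

lemma D_nonneg: "x \<in> V \<Longrightarrow> D x \<ge> 0"
proof (induction x rule: ht_induct)
  case (step x)
  show ?case
  proof (cases "x = r")
    case True then show ?thesis using D_r by simp
  next
    case False
    then show ?thesis using step D_par[OF step(1) False] w_pos[OF step(1) False] parV ht_par by fastforce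
  qed
qed

lemma D_mono0: "x \<in> V \<Longrightarrow> desc x v \<Longrightarrow> D v \<le> D x"
proof (induction x rule: ht_induct)
  case (step x)
  show ?case
  proof (cases "x = v")
    case True then show ?thesis by simp
  next
    case False
    hence xr: "x \<noteq> r" using "step.prems" desc_r by auto
    hence "desc (par x) v" using desc_step step(1) "step.prems" False by blast
    then show ?thesis using step D_par[OF step(1) xr] w_pos[OF step(1) xr] parV ht_par xr by fastforce
  qed
qed

lemma path_sum0: "x \<in> V \<Longrightarrow> desc x c \<Longrightarrow> (\<Sum>u \<in> {u. desc x u \<and> desc u c \<and> u \<noteq> c}. w u) = D x - D c"
proof (induction x rule: ht_induct)
  case (step x)
  show ?case
  proof (cases "x = c")
    case True
    have e: "{u. desc x u \<and> desc u c \<and> u \<noteq> c} = {}" using desc_antisym True by blast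
    show ?thesis unfolding e using True by simp
  next
    case False
    hence xr: "x \<noteq> r" using "step.prems" desc_r by auto
    have pV: "par x \<in> V" using parV[OF step(1) xr] .
    have dp: "desc (par x) c" using desc_step step(1) "step.prems" False xr by blast
    have eq: "{u. desc x u \<and> desc u c \<and> u \<noteq> c} = insert x {u. desc (par x) u \<and> desc u c \<and> u \<noteq> c}"
      using desc_step[OF step(1) xr] False "step.prems" by auto
    have nin: "x \<notin> {u. desc (par x) u \<and> desc u c \<and> u \<noteq> c}"
      using desc_ht_le ht_par[OF step(1) xr] by fastforce
    have fin: "finite {u. desc (par x) u \<and> desc u c \<and> u \<noteq> c}"
      using sub_fin unfolding sub_def by (rule rev_finite_subset) auto
    have "(\<Sum>u \<in> {u. desc x u \<and> desc u c \<and> u \<noteq> c}. w u) = w x + (D (par x) - D c)"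
      unfolding eq sum.insert[OF fin nin] using step(2)[OF pV _ dp] ht_par[OF step(1) xr] by simp
    then show ?thesis using D_par[OF step(1) xr] by simp
  qed
qed

lemma D_mono: "desc x v \<Longrightarrow> D v \<le> D x" using D_mono0 desc_V by blast
lemma path_sum: "desc x c \<Longrightarrow> (\<Sum>u \<in> {u. desc x u \<and> desc u c \<and> u \<noteq> c}. w u) = D x - D c"
  using path_sum0 desc_V by blast

end

lemma run_Nil[simp]: "run h pos [] = pos" unfolding run_def by simp
lemma run_Cons[simp]: "run h pos (m # ms) = run h (step h pos m) ms" unfolding run_def by simp
lemma run_append: "run h pos (xs @ ys) = run h (run h pos xs) ys" unfolding run_def by simp

lemma move_cost_append: "move_cost wt q h pos (xs @ ys) = move_cost wt q h pos xs + move_cost wt q h (run h pos xs) ys"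
proof (induction xs arbitrary: pos)
  case Nil then show ?case by simp
next
  case (Cons m xs) then show ?case by (cases m) auto
qed

lemma valid_append: "valid_moves adj h pos (xs @ ys) \<longleftrightarrow> valid_moves adj h pos xs \<and> valid_moves adj h (run h pos xs) ys"
proof (induction xs arbitrary: pos)
  case Nil then show ?case by simp
next
  case (Cons m xs) then show ?case by (cases m) auto
qed

lemma visited_append: "visited h pos (xs @ ys) = visited h pos xs \<union> visited h (run h pos xs) ys"
proof (induction xs arbitrary: pos)
  case Nil then show ?case by (cases ys) auto
next
  case (Cons m xs) then show ?case by auto
qed

lemma visited_pos: "set pos \<subseteq> visited h pos xs"
  by (cases xs) auto

lemma visited_run: "set (run h pos xs) \<subseteq> visited h pos xs"
proof (induction xs arbitrary: pos)
  case Nil then show ?case by simp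
next
  case (Cons m xs) then show ?case by auto
qed

lemma length_step: "length (step h pos m) = length pos + (if m = Invoke then 1 else 0)"
  by (cases m) auto

lemma length_run_ge: "length pos \<le> length (run h pos xs)"
proof (induction xs arbitrary: pos)
  case Nil then show ?case by simp
next
  case (Cons m xs) then show ?case using length_step[of h pos m] by (metis le_add1 order_trans run_Cons)
qed

lemma visited_nonempty: "visited h pos xs \<noteq> {} \<Longrightarrow> run h pos xs \<noteq> []"
proof (induction xs arbitrary: pos)
  case Nil then show ?case by simp
next
  case (Cons m xs)
  show ?case
  proof (cases "pos = []")
    case True
    then have "visited h (step h pos m) xs \<noteq> {}" using Cons.prems by simp
    then show ?thesis using Cons.IH by simp
  next
    case False
    then show ?thesis using length_run_ge[of "step h pos m" h xs] length_step[of h pos m] by force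
  qed
qed

lemma agent_path:
  assumes "j < length pos"
  shows "run h pos (map (Move j) (ys @ [y])) = pos[j := y]"
  using assms
proof (induction ys arbitrary: pos)
  case Nil then show ?case by simp
next
  case (Cons a ys) then show ?case by simp
qed

lemma multi_move:
  assumes "distinct I" "\<forall>i \<in> set I. i < length pos"
  shows "run h pos (map (\<lambda>i. Move i c) I) = map (\<lambda>k. if k \<in> set I then c else pos ! k) [0..<length pos]"
  using assms
proof (induction I arbitrary: pos)
  case Nil then show ?case by (simp add: map_nth)
next
  case (Cons i I)
  have "run h pos (map (\<lambda>i. Move i c) (i # I)) = run h (pos[i := c]) (map (\<lambda>i. Move i c) I)" by simp
  also have "\<dots> = map (\<lambda>k. if k \<in> set I then c else pos[i := c] ! k) [0..<length pos]"
    using Cons by simp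
  also have "\<dots> = map (\<lambda>k. if k \<in> set (i # I) then c else pos ! k) [0..<length pos]"
    by (rule map_cong) (auto simp: nth_list_update)
  finally show ?case .
qed

lemma multi_move_cost:
  assumes "distinct I" "\<forall>i \<in> set I. i < length pos \<and> pos ! i = v"
  shows "move_cost wt q h pos (map (\<lambda>i. Move i c) I) = real (length I) * wt v c"
  using assms
proof (induction I arbitrary: pos)
  case Nil then show ?case by simp
next
  case (Cons i I)
  have "\<forall>k \<in> set I. k < length (pos[i := c]) \<and> pos[i := c] ! k = v" using Cons.prems by (auto simp: nth_list_update)
  then have "move_cost wt q h (pos[i := c]) (map (\<lambda>i. Move i c) I) = real (length I) * wt v c"
    using Cons by simp
  then show ?case using Cons.prems by (simp add: algebra_simps)
qed

lemma multi_move_valid: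
  assumes "distinct I" "\<forall>i \<in> set I. i < length pos \<and> pos ! i = v" "adj v c"
  shows "valid_moves adj h pos (map (\<lambda>i. Move i c) I)"
  using assms
proof (induction I arbitrary: pos)
  case Nil then show ?case by simp
next
  case (Cons i I)
  have "\<forall>k \<in> set I. k < length (pos[i := c]) \<and> pos[i := c] ! k = v" using Cons.prems by (auto simp: nth_list_update)
  then show ?case using Cons by simp
qed

context tctx begin

abbreviation "adj \<equiv> tadj V r par"
abbreviation "wt \<equiv> twt r par w"

lemma tadj_cases: assumes "adj x y"
  shows "x \<in> V \<and> y \<in> V \<and> ((x \<noteq> r \<and> par x = y \<and> wt x y = w x \<and> D x = w x + D y) \<or>
                            (y \<noteq> r \<and> par y = x \<and> wt x y = w y \<and> D y = w y + D x))"
proof -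
  have V: "x \<in> V" "y \<in> V" using assms unfolding tadj_def by auto
  show ?thesis
  proof (cases "x \<noteq> r \<and> par x = y")
    case True then show ?thesis using V D_par[OF V(1)] unfolding twt_def by simp
  next
    case False
    then have h: "y \<noteq> r" "par y = x" using assms unfolding tadj_def by auto
    have "wt x y = w y" using False unfolding twt_def by auto
    then show ?thesis using V h D_par[OF V(2) h(1)] by simp
  qed
qed

lemma wt_abs: assumes "adj x y" shows "wt x y = \<bar>D x - D y\<bar>"
proof -
  have p: "w x > 0" if "x \<in> V" "x \<noteq> r" for x using w_pos that by auto
  show ?thesis using tadj_cases[OF assms] by (auto simp: abs_of_pos w_pos)
qed

lemma walk_weight_snoc: "xs \<noteq> [] \<Longrightarrow> walk_weight wt' (xs @ [y]) = walk_weight wt' xs + wt' (last xs) y"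
proof -
  assume ne: "xs \<noteq> []"
  then obtain n where n: "length xs = Suc n" by (cases xs) auto
  have "walk_weight wt' (xs @ [y]) = (\<Sum>i < Suc n. wt' ((xs @ [y]) ! i) ((xs @ [y]) ! Suc i))"
    unfolding walk_weight_def using n by simp
  also have "\<dots> = (\<Sum>i < n. wt' ((xs @ [y]) ! i) ((xs @ [y]) ! Suc i)) + wt' ((xs @ [y]) ! n) ((xs @ [y]) ! Suc n)"
    by simp
  also have "(\<Sum>i < n. wt' ((xs @ [y]) ! i) ((xs @ [y]) ! Suc i)) = (\<Sum>i < n. wt' (xs ! i) (xs ! Suc i))"
    by (rule sum.cong) (auto simp: nth_append n)
  also have "(xs @ [y]) ! n = last xs" using n ne by (simp add: nth_append last_conv_nth)
  also have "(xs @ [y]) ! Suc n = y" using n by (simp add: nth_append)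
  finally show ?thesis unfolding walk_weight_def using n by simp
qed

lemma is_walk_snoc: "xs \<noteq> [] \<Longrightarrow> is_walk adj' (xs @ [y]) \<longleftrightarrow> is_walk adj' xs \<and> adj' (last xs) y"
proof -
  assume ne: "xs \<noteq> []"
  then obtain n where n: "length xs = Suc n" by (cases xs) auto
  have l: "last xs = xs ! n" using n ne by (simp add: last_conv_nth)
  have sp: "(\<forall>i<Suc n. P i) = ((\<forall>i<n. P i) \<and> P n)" for P by (auto simp: less_Suc_eq)
  have A: "is_walk adj' (xs @ [y]) \<longleftrightarrow> (\<forall>i<Suc n. adj' ((xs @ [y]) ! i) ((xs @ [y]) ! Suc i))"
    unfolding is_walk_def using n by simp
  have B: "(\<forall>i<n. adj' ((xs @ [y]) ! i) ((xs @ [y]) ! Suc i)) = (\<forall>i<n. adj' (xs ! i) (xs ! Suc i))"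
    using n by (auto simp: nth_append)
  have C: "adj' ((xs @ [y]) ! n) ((xs @ [y]) ! Suc n) = adj' (last xs) y"
    using n l by (simp add: nth_append)
  show ?thesis unfolding A sp B C unfolding is_walk_def using n ne by simp
qed

lemma walk_lb: "is_walk adj xs \<Longrightarrow> walk_weight wt xs \<ge> \<bar>D (last xs) - D (hd xs)\<bar>"
proof (induction xs rule: rev_induct)
  case Nil then show ?case unfolding is_walk_def by simp
next
  case (snoc y xs)
  show ?case
  proof (cases "xs = []")
    case True then show ?thesis unfolding walk_weight_def by simp
  next
    case False
    have w: "is_walk adj xs" "adj (last xs) y" using is_walk_snoc[OF False] snoc.prems by auto
    have "walk_weight wt (xs @ [y]) = walk_weight wt xs + \<bar>D (last xs) - D y\<bar>"
      using walk_weight_snoc[OF False] wt_abs[OF w(2)] by simp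
    moreover have "walk_weight wt xs \<ge> \<bar>D (last xs) - D (hd xs)\<bar>" using snoc.IH w(1) .
    ultimately show ?thesis using False by auto
  qed
qed

lemma walk_ex: assumes "x \<in> V" "desc x v"
  shows "\<exists>xs. is_walk adj xs \<and> hd xs = v \<and> last xs = x \<and> walk_weight wt xs = D x - D v"
  using assms
proof (induction x rule: ht_induct)
  case (step x)
  show ?case
  proof (cases "x = v")
    case True
    then show ?thesis by (intro exI[of _ "[x]"]) (auto simp: is_walk_def walk_weight_def)
  next
    case False
    hence xr: "x \<noteq> r" using step.prems desc_r by auto
    have pV: "par x \<in> V" using parV[OF step(1) xr] .
    have dp: "desc (par x) v" using desc_step step(1) step.prems False xr by blast
    obtain xs where xs: "is_walk adj xs" "hd xs = v" "last xs = par x" "walk_weight wt xs = D (par x) - D v"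
      using step(2)[OF pV _ dp] ht_par[OF step(1) xr] by auto
    have ne: "xs \<noteq> []" using xs(1) unfolding is_walk_def by auto
    have a: "adj (par x) x" unfolding tadj_def using step(1) pV xr by auto
    have "wt (par x) x = w x" using wt_abs[OF a] D_par[OF step(1) xr] w_pos[OF step(1) xr] by simp
    then show ?thesis using xs ne a is_walk_snoc[OF ne] walk_weight_snoc[OF ne] D_par[OF step(1) xr]
      by (intro exI[of _ "xs @ [x]"]) auto
  qed
qed

lemma gdist_eq: assumes "desc x v" shows "gdist adj wt v x = D x - D v"
proof -
  obtain xs where xs: "is_walk adj xs" "hd xs = v" "last xs = x" "walk_weight wt xs = D x - D v"
    using walk_ex assms desc_V by blast
  show ?thesis unfolding gdist_def
  proof (rule cInf_eq_minimum)
    show "D x - D v \<in> {walk_weight wt xs |xs. is_walk adj xs \<and> hd xs = v \<and> last xs = x}"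
    proof -
      have "D x - D v = walk_weight wt xs \<and> is_walk adj xs \<and> hd xs = v \<and> last xs = x" using xs by simp
      then show ?thesis by blast
    qed
  next
    fix y assume "y \<in> {walk_weight wt xs |xs. is_walk adj xs \<and> hd xs = v \<and> last xs = x}"
    then obtain ys where ys: "y = walk_weight wt ys" "is_walk adj ys" "hd ys = v" "last ys = x" by auto
    have "\<bar>D (last ys) - D (hd ys)\<bar> \<le> walk_weight wt ys" using walk_lb[OF ys(2)] .
    then show "D x - D v \<le> y" using ys by simp
  qed
qed

lemma gdist_root: "x \<in> V \<Longrightarrow> gdist adj wt r x = D x"
  using gdist_eq[OF desc_root] D_r by simp

end

context tctx begin

definition cnt :: "'v \<Rightarrow> 'v list \<Rightarrow> nat" where
  "cnt u P = (\<Sum>i<length P. if desc (P ! i) u then 1 else 0)"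

definition g :: "nat \<Rightarrow> real" where "g n = (if n = 0 then 2 else real n)"

definition phi :: "'v set \<Rightarrow> 'v list \<Rightarrow> 'v \<Rightarrow> real" where
  "phi Vis P u = real (cnt u P) + (if u \<in> Vis \<and> cnt u P = 0 then 2 else 0)"

definition Phi :: "'v set \<Rightarrow> 'v list \<Rightarrow> real" where
  "Phi Vis P = (\<Sum>u \<in> V - {r}. w u * phi Vis P u)"

lemma sum_update_aux:
  fixes F G :: "nat \<Rightarrow> nat"
  assumes "i < n" "\<forall>k. k \<noteq> i \<longrightarrow> F k = G k"
  shows "(\<Sum>k<n. F k) + G i = (\<Sum>k<n. G k) + F i"
proof -
  have i: "i \<in> {..<n}" using assms by simp
  have a: "(\<Sum>k<n. F k) = F i + (\<Sum>k\<in>{..<n}-{i}. F k)" using sum.remove[of "{..<n}" i F] i by simp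
  have b: "(\<Sum>k<n. G k) = G i + (\<Sum>k\<in>{..<n}-{i}. G k)" using sum.remove[of "{..<n}" i G] i by simp
  have c: "(\<Sum>k\<in>{..<n}-{i}. F k) = (\<Sum>k\<in>{..<n}-{i}. G k)" using assms(2) by (intro sum.cong) auto
  show ?thesis using a b c by simp
qed

lemma cnt_update: assumes "i < length P"
  shows "cnt u (P[i := y]) + (if desc (P ! i) u then 1 else 0) = cnt u P + (if desc y u then 1 else 0)"
proof -
  have "(\<Sum>k<length P. if desc (P[i := y] ! k) u then 1 else 0) + (if desc (P ! i) u then 1 else (0::nat))
      = (\<Sum>k<length P. if desc (P ! k) u then 1 else 0) + (if desc (P[i := y] ! i) u then 1 else 0)"
    using sum_update_aux[OF assms, where F="\<lambda>k. if desc (P[i := y] ! k) u then 1 else 0" and G="\<lambda>k. if desc (P ! k) u then 1 else 0"]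
    by (simp add: assms split: if_splits)
  then show ?thesis unfolding cnt_def using assms by simp
qed

lemma cnt_snoc: "cnt u (P @ [x]) = cnt u P + (if desc x u then 1 else 0)"
  unfolding cnt_def by (simp add: nth_append)

lemma cnt_Nil: "cnt u [] = 0" unfolding cnt_def by simp

lemma cnt_pos: "i < length P \<Longrightarrow> desc (P ! i) u \<Longrightarrow> cnt u P \<ge> 1"
proof -
  assume a: "i < length P" "desc (P ! i) u"
  have "(if desc (P ! i) u then 1 else 0) \<le> (\<Sum>k<length P. if desc (P ! k) u then 1 else (0::nat))"
    by (rule member_le_sum) (use a in auto)
  then show ?thesis unfolding cnt_def using a by simp
qed

lemma Phi_Nil: "Phi {} [] = 0"
  unfolding Phi_def phi_def cnt_Nil by simp

lemma Phi_full: "V \<subseteq> Vis \<Longrightarrow> Phi Vis P = (\<Sum>u \<in> V - {r}. w u * g (cnt u P))"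
  unfolding Phi_def phi_def g_def by (intro sum.cong) auto

lemma Phi_invoke: "Phi (insert r Vis) (P @ [r]) = Phi Vis P"
  unfolding Phi_def phi_def
proof (intro sum.cong refl)
  fix u assume u: "u \<in> V - {r}"
  have "\<not> desc r u" using desc_r u by auto
  then show "w u * (real (cnt u (P @ [r])) + (if u \<in> insert r Vis \<and> cnt u (P @ [r]) = 0 then 2 else 0)) =
             w u * (real (cnt u P) + (if u \<in> Vis \<and> cnt u P = 0 then 2 else 0))"
    using u cnt_snoc by simp
qed

lemma Phi_move:
  assumes i: "i < length P" and sP: "set P \<subseteq> Vis" and a: "adj (P ! i) y"
  shows "Phi (insert y Vis) (P[i := y]) \<le> Phi Vis P + wt (P ! i) y"
proof -
  let ?x = "P ! i"
  let ?P' = "P[i := y]"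
  let ?Vis' = "insert y Vis"
  obtain e where e: "e \<in> V - {r}" "wt ?x y = w e"
    "\<forall>u \<in> V - {r}. u \<noteq> e \<longrightarrow> phi ?Vis' ?P' u \<le> phi Vis P u" "phi ?Vis' ?P' e \<le> phi Vis P e + 1"
  proof -
    have xV: "?x \<in> V" and yV: "y \<in> V" using tadj_cases[OF a] by auto
    have xVis: "?x \<in> Vis" using sP i by (meson nth_mem subsetD)
    have cu: "cnt u ?P' + (if desc ?x u then 1 else 0) = cnt u P + (if desc y u then 1 else 0)" for u
      using cnt_update[OF i] .
    consider (up) "?x \<noteq> r" "par ?x = y" "wt ?x y = w ?x" | (down) "y \<noteq> r" "par y = ?x" "wt ?x y = w y"
      using tadj_cases[OF a] by blast
    then show ?thesis
    proof cases
      case up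
      have ds: "desc ?x u \<longleftrightarrow> ?x = u \<or> desc y u" for u using desc_step[OF xV up(1)] up(2) by simp
      have ny: "\<not> desc y ?x" using desc_ht_le ht_par[OF xV up(1)] up(2) by fastforce
      have cyP: "cnt y P \<ge> 1" using cnt_pos[OF i] desc_step[OF xV up(1)] up(2) desc_refl[OF yV] by auto
      show ?thesis
      proof (rule that[of ?x])
        show "?x \<in> V - {r}" using xV up by simp
        show "wt ?x y = w ?x" using up by simp
        show "\<forall>u \<in> V - {r}. u \<noteq> ?x \<longrightarrow> phi ?Vis' ?P' u \<le> phi Vis P u"
        proof (intro ballI impI)
          fix u assume u: "u \<in> V - {r}" "u \<noteq> ?x"
          have c: "cnt u ?P' = cnt u P" using cu[of u] ds[of u] u by auto
          show "phi ?Vis' ?P' u \<le> phi Vis P u"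
          proof (cases "u = y")
            case True then show ?thesis unfolding phi_def using c cyP by simp
          next
            case False then show ?thesis unfolding phi_def using c by simp
          qed
        qed
        show "phi ?Vis' ?P' ?x \<le> phi Vis P ?x + 1"
        proof -
          have c: "cnt ?x ?P' + 1 = cnt ?x P" using cu[of ?x] ny desc_refl[OF xV] by simp
          then show ?thesis unfolding phi_def using xVis by auto
        qed
      qed
    next
      case down
      have ds: "desc y u \<longleftrightarrow> y = u \<or> desc ?x u" for u using desc_step[OF yV down(1)] down(2) by simp
      have nx: "\<not> desc ?x y" using desc_ht_le ht_par[OF yV down(1)] down(2) by fastforce
      show ?thesis
      proof (rule that[of y])
        show "y \<in> V - {r}" using yV down by simp
        show "wt ?x y = w y" using down by simp
        show "\<forall>u \<in> V - {r}. u \<noteq> y \<longrightarrow> phi ?Vis' ?P' u \<le> phi Vis P u"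
        proof (intro ballI impI)
          fix u assume u: "u \<in> V - {r}" "u \<noteq> y"
          have c: "cnt u ?P' = cnt u P" using cu[of u] ds[of u] u by auto
          show "phi ?Vis' ?P' u \<le> phi Vis P u" unfolding phi_def using c u by simp
        qed
        show "phi ?Vis' ?P' y \<le> phi Vis P y + 1"
        proof -
          have c: "cnt y ?P' = cnt y P + 1" using cu[of y] nx desc_refl[OF yV] by simp
          then show ?thesis unfolding phi_def by simp
        qed
      qed
    qed
  qed
  have wn: "u \<in> V - {r} \<Longrightarrow> w u \<ge> 0" for u using w_pos by force
  have "Phi ?Vis' ?P' - Phi Vis P = (\<Sum>u \<in> V - {r}. w u * (phi ?Vis' ?P' u - phi Vis P u))"
    unfolding Phi_def by (simp add: sum_subtractf right_diff_distrib)
  also have "\<dots> \<le> (\<Sum>u \<in> V - {r}. if u = e then w u else 0)"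
  proof (rule sum_mono)
    fix u assume u: "u \<in> V - {r}"
    show "w u * (phi ?Vis' ?P' u - phi Vis P u) \<le> (if u = e then w u else 0)"
    proof (cases "u = e")
      case True
      then show ?thesis using e(4) wn[OF u] by (simp add: mult_left_le)
    next
      case False
      then show ?thesis using e(3) u wn[OF u] by (simp add: mult_nonneg_nonpos)
    qed
  qed
  also have "\<dots> = w e" using e(1) finV by (simp add: sum.delta)
  finally show ?thesis using e(2) by simp
qed

lemma run_in_V: "valid_moves adj r pos ms \<Longrightarrow> set pos \<subseteq> V \<Longrightarrow> set (run r pos ms) \<subseteq> V"
proof (induction ms arbitrary: pos)
  case Nil then show ?case by simp
next
  case (Cons m ms)
  show ?case
  proof (cases m)
    case Invoke then show ?thesis using Cons rV by simp
  next
    case (Move i y)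
    have "y \<in> V" using Cons.prems Move tadj_cases by auto
    then have "set (pos[i := y]) \<subseteq> V" using Cons.prems by (meson set_update_subsetI)
    then show ?thesis using Cons Move by simp
  qed
qed

lemma potential_bound:
  "valid_moves adj r pos ms \<Longrightarrow> set pos \<subseteq> V \<Longrightarrow> set pos \<subseteq> Vis \<Longrightarrow>
   move_cost wt q r pos ms + Phi Vis pos \<ge>
     q * (real (length (run r pos ms)) - real (length pos)) + Phi (Vis \<union> visited r pos ms) (run r pos ms)"
proof (induction ms arbitrary: pos Vis)
  case Nil
  have "Vis \<union> set pos = Vis" using Nil by auto
  then show ?case by simp
next
  case (Cons m ms)
  show ?case
  proof (cases m)
    case Invoke
    let ?p = "pos @ [r]"
    have v: "valid_moves adj r ?p ms" using Cons.prems Invoke by simp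
    have s1: "set ?p \<subseteq> V" "set ?p \<subseteq> insert r Vis" using Cons.prems rV by auto
    have IH: "move_cost wt q r ?p ms + Phi (insert r Vis) ?p \<ge>
        q * (real (length (run r ?p ms)) - real (length ?p)) + Phi (insert r Vis \<union> visited r ?p ms) (run r ?p ms)"
      using Cons.IH[OF v s1] .
    have vs: "insert r Vis \<union> visited r ?p ms = Vis \<union> visited r pos (m # ms)"
      using visited_pos[of ?p r ms] Cons.prems Invoke by auto
    show ?thesis using IH vs Phi_invoke[of Vis pos] Invoke by (simp add: algebra_simps)
  next
    case (Move i y)
    let ?p = "pos[i := y]"
    have v: "valid_moves adj r ?p ms" and i: "i < length pos" and a: "adj (pos ! i) y"
      using Cons.prems Move by auto
    have yV: "y \<in> V" using tadj_cases[OF a] by auto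
    have sp: "set ?p \<subseteq> V" using Cons.prems yV by (meson set_update_subsetI)
    have sp2: "set ?p \<subseteq> insert y Vis" using Cons.prems by (meson set_update_subsetI subset_insertI2 insertI1)
    have IH: "move_cost wt q r ?p ms + Phi (insert y Vis) ?p \<ge>
        q * (real (length (run r ?p ms)) - real (length ?p)) + Phi (insert y Vis \<union> visited r ?p ms) (run r ?p ms)"
      using Cons.IH[OF v sp sp2] .
    have yp: "y \<in> set ?p" using i by (simp add: set_update_memI)
    have vs: "insert y Vis \<union> visited r ?p ms = Vis \<union> visited r pos (m # ms)"
      using visited_pos[of ?p r ms] Cons.prems Move yp by auto
    have pm: "Phi (insert y Vis) ?p \<le> Phi Vis pos + wt (pos ! i) y"
      using Phi_move[OF i _ a] Cons.prems by blast
    show ?thesis using IH vs pm Move by simp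
  qed
qed

lemma lower_bound:
  assumes "explores V adj r S"
  shows "run r [] S \<noteq> [] \<and> set (run r [] S) \<subseteq> V \<and>
         cost wt q r S \<ge> q * real (length (run r [] S)) + (\<Sum>u \<in> V - {r}. w u * g (cnt u (run r [] S)))"
proof -
  have v: "valid_moves adj r [] S" and vis: "V \<subseteq> visited r [] S" using assms unfolding explores_def by auto
  have pb: "move_cost wt q r [] S + Phi {} [] \<ge>
     q * (real (length (run r [] S)) - real (length ([]::'v list))) + Phi ({} \<union> visited r [] S) (run r [] S)"
    by (rule potential_bound[OF v]) auto
  have e1: "Phi ({} \<union> visited r [] S) (run r [] S) = (\<Sum>u \<in> V - {r}. w u * g (cnt u (run r [] S)))"
    using Phi_full[of "{} \<union> visited r [] S"] vis by simp
  have ne: "run r [] S \<noteq> []" using visited_nonempty[of r "[]" S] vis rV by blast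
  have sv: "set (run r [] S) \<subseteq> V" using run_in_V[OF v] by simp
  have "cost wt q r S = move_cost wt q r [] S" unfolding cost_def ..
  then show ?thesis using pb e1 ne sv Phi_Nil by simp
qed

end

context tctx begin

lemma tree_induct[consumes 1, case_names step]:
  assumes "x \<in> V" and "\<And>x. x \<in> V \<Longrightarrow> (\<And>c. c \<in> ch x \<Longrightarrow> P c) \<Longrightarrow> P x"
  shows "P x"
  using assms(1)
proof (induction "card (sub x)" arbitrary: x rule: less_induct)
  case less
  show ?case
  proof (rule assms(2)[OF less.prems])
    fix c assume c: "c \<in> ch x"
    have cV: "c \<in> V" using c ch_iff by auto
    have "sub c \<subset> sub x"
    proof
      show "sub c \<subseteq> sub x" using ch_desc[OF c] desc_trans unfolding sub_def by blast
      show "sub c \<noteq> sub x" using ch_not_desc[OF c] desc_refl[OF less.prems] unfolding sub_def by blast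
    qed
    then have "card (sub c) < card (sub x)" using sub_fin psubset_card_mono by blast
    then show "P c" using less.hyps cV by blast
  qed
qed

end

locale lctx = tctx +
  fixes q :: real and lk :: "'a \<Rightarrow> nat" and lul :: "'a \<Rightarrow> 'a" and luc :: "'a \<Rightarrow> 'a option"
  assumes q_nonneg: "q \<ge> 0"
    and labels: "valid_labels V r par w q lk lul luc"
begin

lemma ch_eq: "children V r par v = ch v" unfolding ch_def ..

lemma is_leaf_iff: "is_leaf V r par v \<longleftrightarrow> v \<in> V \<and> v \<noteq> r \<and> ch v = {}"
  unfolding is_leaf_def ch_def ..

lemma lab_leaf: "v \<in> V \<Longrightarrow> v \<noteq> r \<Longrightarrow> ch v = {} \<Longrightarrow> lk v = 1 \<and> lul v = v \<and> luc v = None"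
  using labels unfolding valid_labels_def is_leaf_iff by blast

lemma lab_lk: "v \<in> V \<Longrightarrow> \<not> (v \<noteq> r \<and> ch v = {}) \<Longrightarrow>
  lk v = max 1 (\<Sum>u \<in> ch v. lk u - (if lk u = 1 \<and> gdist adj wt v (lul u) \<le> gdist adj wt r v + q then 1 else 0))"
  using labels unfolding valid_labels_def is_leaf_iff ch_eq by blast

lemma lab_luc: "v \<in> V \<Longrightarrow> ch v \<noteq> {} \<Longrightarrow>
  \<exists>u \<in> ch v. luc v = Some u \<and> lul v = lul u \<and> (\<forall>u' \<in> ch v. gdist adj wt v (lul u') \<le> gdist adj wt v (lul u))"
proof -
  assume a: "v \<in> V" "ch v \<noteq> {}"
  then have "\<not> is_leaf V r par v" unfolding is_leaf_iff by auto
  then show ?thesis using labels a unfolding valid_labels_def ch_eq by blast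
qed

lemma lk_pos: assumes "v \<in> V" shows "lk v \<ge> 1"
proof (cases "v \<noteq> r \<and> ch v = {}")
  case True then show ?thesis using lab_leaf assms by simp
next
  case False then show ?thesis using lab_lk[OF assms False] by simp
qed

lemma lul_desc: "x \<in> V \<Longrightarrow> x \<noteq> r \<Longrightarrow> desc (lul x) x"
proof (induction x rule: tree_induct)
  case (step x)
  show ?case
  proof (cases "ch x = {}")
    case True then show ?thesis using lab_leaf[OF step(1) step(3) True] desc_refl[OF step(1)] by simp
  next
    case False
    obtain u where u: "u \<in> ch x" "lul x = lul u" using lab_luc[OF step(1) False] by blast
    have "desc (lul u) u" using step(2)[OF u(1)] u(1) ch_iff by auto
    then show ?thesis using u desc_trans ch_desc by metis
  qed
qed

lemma lul_ch_desc: "c \<in> ch v \<Longrightarrow> desc (lul c) c \<and> desc (lul c) v"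
  using lul_desc ch_iff ch_desc desc_trans by metis

lemma gd_ch: "c \<in> ch v \<Longrightarrow> gdist adj wt v (lul c) = D (lul c) - D v"
  using lul_ch_desc gdist_eq by blast

lemma gd_r: "v \<in> V \<Longrightarrow> gdist adj wt r v = D v"
  using gdist_root .

lemma lab_lk': "v \<in> V \<Longrightarrow> \<not> (v \<noteq> r \<and> ch v = {}) \<Longrightarrow>
  lk v = max 1 (\<Sum>u \<in> ch v. lk u - (if lk u = 1 \<and> D (lul u) - D v \<le> D v + q then 1 else 0))"
proof -
  assume a: "v \<in> V" "\<not> (v \<noteq> r \<and> ch v = {})"
  have "(\<Sum>u \<in> ch v. lk u - (if lk u = 1 \<and> gdist adj wt v (lul u) \<le> gdist adj wt r v + q then 1 else 0))
      = (\<Sum>u \<in> ch v. lk u - (if lk u = 1 \<and> D (lul u) - D v \<le> D v + q then 1 else 0))"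
    by (rule sum.cong) (auto simp: gd_ch gd_r a)
  then show ?thesis using lab_lk[OF a] by simp
qed

lemma lab_luc': "v \<in> V \<Longrightarrow> ch v \<noteq> {} \<Longrightarrow>
  \<exists>u \<in> ch v. luc v = Some u \<and> lul v = lul u \<and> (\<forall>u' \<in> ch v. D (lul u') \<le> D (lul u))"
proof -
  assume a: "v \<in> V" "ch v \<noteq> {}"
  obtain u where u: "u \<in> ch v" "luc v = Some u" "lul v = lul u"
     "\<forall>u' \<in> ch v. gdist adj wt v (lul u') \<le> gdist adj wt v (lul u)" using lab_luc[OF a] by blast
  then show ?thesis using gd_ch by (intro bexI[of _ u]) auto
qed

lemma L1: "x \<in> V \<Longrightarrow> lk x \<ge> 2 \<Longrightarrow> D (lul x) > q + 2 * D x"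
proof (induction x rule: tree_induct)
  case (step x)
  have nl: "\<not> (x \<noteq> r \<and> ch x = {})" using lab_leaf[OF step(1)] step(3) by auto
  have ne: "ch x \<noteq> {}"
  proof
    assume "ch x = {}"
    then have "lk x = 1" using lab_lk'[OF step(1) nl] by simp
    then show False using step(3) by simp
  qed
  let ?t = "\<lambda>u. lk u - (if lk u = 1 \<and> D (lul u) - D x \<le> D x + q then 1 else 0)"
  have s: "(\<Sum>u \<in> ch x. ?t u) \<ge> 2" using lab_lk'[OF step(1) nl] step(3) by simp
  obtain c where c: "c \<in> ch x" "?t c \<noteq> 0"
  proof (rule ccontr)
    assume "\<not> thesis"
    then have "\<forall>c \<in> ch x. ?t c = 0" using that by blast
    then have "(\<Sum>u \<in> ch x. ?t u) = 0" by simp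
    then show False using s by simp
  qed
  have cV: "c \<in> V" using c ch_iff by auto
  have Dc: "D x \<le> D c" using ch_desc[OF c(1)] D_mono by blast
  have big: "D (lul c) > q + 2 * D x"
  proof (cases "lk c \<ge> 2")
    case True
    then show ?thesis using step(2)[OF c(1) True] Dc by simp
  next
    case False
    then have "lk c = 1" using lk_pos[OF cV] by simp
    then show ?thesis using c(2) by (auto split: if_splits)
  qed
  obtain u where u: "u \<in> ch x" "lul x = lul u" "\<forall>u' \<in> ch x. D (lul u') \<le> D (lul u)"
    using lab_luc'[OF step(1) ne] by blast
  show ?case using big u c by fastforce
qed

definition ret :: "'a \<Rightarrow> 'a \<Rightarrow> bool" where
  "ret v c \<longleftrightarrow> Some c \<noteq> luc v \<and> gdist adj wt v (lul c) \<le> gdist adj wt r v + q"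

lemma ret_iff: "c \<in> ch v \<Longrightarrow> ret v c \<longleftrightarrow> Some c \<noteq> luc v \<and> D (lul c) - D v \<le> D v + q"
  unfolding ret_def using gd_ch gd_r ch_desc by simp

lemma close_lk1: "c \<in> ch v \<Longrightarrow> D (lul c) - D v \<le> D v + q \<Longrightarrow> lk c = 1"
proof (rule ccontr)
  assume a: "c \<in> ch v" "D (lul c) - D v \<le> D v + q" "lk c \<noteq> 1"
  have cV: "c \<in> V" using a ch_iff by auto
  then have "lk c \<ge> 2" using lk_pos a by (metis Suc_1 Suc_leI le_neq_implies_less)
  then have "D (lul c) > q + 2 * D c" using L1 cV by blast
  moreover have "D c \<ge> D v" using ch_desc[OF a(1)] D_mono by blast
  ultimately show False using a(2) by simp
qed

lemma lk_rel: assumes vV: "v \<in> V" and ne: "ch v \<noteq> {}"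
  shows "(\<Sum>c \<in> ch v. lk c - (if ret v c then 1 else 0)) = lk v"
proof -
  obtain u where u: "u \<in> ch v" "luc v = Some u" "lul v = lul u" "\<forall>u' \<in> ch v. D (lul u') \<le> D (lul u)"
    using lab_luc'[OF vV ne] by blast
  have nl: "\<not> (v \<noteq> r \<and> ch v = {})" using ne by simp
  have lkv: "lk v = max 1 (\<Sum>c \<in> ch v. lk c - (if lk c = 1 \<and> D (lul c) - D v \<le> D v + q then 1 else 0))"
    using lab_lk'[OF vV nl] .
  have lkp: "c \<in> ch v \<Longrightarrow> lk c \<ge> 1" for c using lk_pos ch_iff by auto
  show ?thesis
  proof (cases "D (lul u) - D v \<le> D v + q")
    case True
    have all: "c \<in> ch v \<Longrightarrow> D (lul c) - D v \<le> D v + q" for c using u(4) True by force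
    have lk1: "c \<in> ch v \<Longrightarrow> lk c = 1" for c using close_lk1 all by blast
    have "(\<Sum>c \<in> ch v. lk c - (if lk c = 1 \<and> D (lul c) - D v \<le> D v + q then 1 else 0)) = 0"
      using lk1 all by simp
    then have l1: "lk v = 1" using lkv by simp
    have "(\<Sum>c \<in> ch v. lk c - (if ret v c then 1 else 0)) = (\<Sum>c \<in> ch v. if c = u then 1 else 0)"
      by (rule sum.cong) (auto simp: ret_iff lk1 all u(2))
    also have "\<dots> = 1" using u(1) ch_fin by (simp add: sum.delta)
    finally show ?thesis using l1 by simp
  next
    case False
    have eq: "(\<Sum>c \<in> ch v. lk c - (if ret v c then 1 else 0)) =
              (\<Sum>c \<in> ch v. lk c - (if lk c = 1 \<and> D (lul c) - D v \<le> D v + q then 1 else 0))"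
    proof (rule sum.cong)
      fix c assume c: "c \<in> ch v"
      show "lk c - (if ret v c then 1 else 0) = lk c - (if lk c = 1 \<and> D (lul c) - D v \<le> D v + q then 1 else 0)"
        using ret_iff[OF c] close_lk1[OF c] False u(2) by auto
    qed simp
    have "(\<Sum>c \<in> ch v. lk c - (if ret v c then 1 else 0)) \<ge> lk u - (if ret v u then 1 else 0)"
      using u(1) ch_fin by (intro member_le_sum) auto
    moreover have "\<not> ret v u" using ret_iff[OF u(1)] u(2) by simp
    ultimately have "(\<Sum>c \<in> ch v. lk c - (if ret v c then 1 else 0)) \<ge> 1" using lkp[OF u(1)] by simp
    then show ?thesis using lkv eq by simp
  qed
qed

end

context tctx begin

definition In :: "'v \<Rightarrow> 'v list \<Rightarrow> real" where
  "In v P = (\<Sum>u \<in> sub v - {v}. w u * g (cnt u P))"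

definition Wt :: "'v \<Rightarrow> real" where "Wt v = (\<Sum>u \<in> sub v - {v}. w u)"

lemma sub_self: "v \<in> V \<Longrightarrow> v \<in> sub v" unfolding sub_def using desc_refl by simp

lemma sub_notr: "u \<in> sub v - {v} \<Longrightarrow> u \<in> V - {r}"
  unfolding sub_def using desc_r desc_V by fastforce

lemma In_decomp: assumes vV: "v \<in> V"
  shows "In v P = (\<Sum>c \<in> ch v. w c * g (cnt c P) + In c P)"
proof -
  let ?f = "\<lambda>u. w u * g (cnt u P)"
  have "In v P = sum ?f (\<Union>c \<in> ch v. sub c)" unfolding In_def sub_decomp[OF vV] ..
  also have "\<dots> = (\<Sum>c \<in> ch v. sum ?f (sub c))"
    by (rule sum.UNION_disjoint) (auto simp: ch_fin sub_fin dest: sub_disj)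
  also have "\<dots> = (\<Sum>c \<in> ch v. ?f c + In c P)"
  proof (rule sum.cong)
    fix c assume c: "c \<in> ch v"
    have cs: "c \<in> sub c" using sub_self ch_iff c by auto
    show "sum ?f (sub c) = ?f c + In c P" unfolding In_def using sum.remove[OF sub_fin cs, of ?f] by simp
  qed simp
  finally show ?thesis .
qed

lemma cnt_decomp: assumes vV: "v \<in> V"
  shows "(\<Sum>c \<in> ch v. cnt c P) \<le> cnt v P"
proof -
  have "(\<Sum>c \<in> ch v. cnt c P) = (\<Sum>i<length P. \<Sum>c \<in> ch v. if desc (P ! i) c then 1 else 0)"
    unfolding cnt_def by (rule sum.swap)
  also have "\<dots> \<le> (\<Sum>i<length P. if desc (P ! i) v then 1 else 0)"
  proof (rule sum_mono)
    fix i
    let ?x = "P ! i"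
    show "(\<Sum>c \<in> ch v. if desc ?x c then 1 else 0) \<le> (if desc ?x v then 1 else (0::nat))"
    proof (cases "\<exists>c \<in> ch v. desc ?x c")
      case True
      then obtain c0 where c0: "c0 \<in> ch v" "desc ?x c0" by blast
      have "(\<Sum>c \<in> ch v. if desc ?x c then 1 else (0::nat)) = (\<Sum>c \<in> ch v. if c = c0 then 1 else 0)"
        by (rule sum.cong) (use c0 ch_unique in auto)
      also have "\<dots> = 1" using c0 ch_fin by (simp add: sum.delta)
      finally show ?thesis using c0 ch_desc desc_trans by auto
    next
      case False
      then show ?thesis by simp
    qed
  qed
  finally show ?thesis unfolding cnt_def .
qed

lemma cnt_mono: "desc u c \<Longrightarrow> cnt u P \<le> cnt c P"
  unfolding cnt_def by (rule sum_mono) (use desc_trans in auto)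

lemma In_zero: assumes "cnt c P = 0" shows "In c P = 2 * Wt c"
proof -
  have "In c P = (\<Sum>u \<in> sub c - {c}. w u * 2)"
    unfolding In_def
  proof (rule sum.cong)
    fix u assume "u \<in> sub c - {c}"
    then have "cnt u P = 0" using cnt_mono[of u c P] assms unfolding sub_def by simp
    then show "w u * g (cnt u P) = w u * 2" unfolding g_def by simp
  qed simp
  then show ?thesis unfolding Wt_def sum_distrib_left by (simp add: mult.commute)
qed

lemma g_nonneg: "g n \<ge> 0" unfolding g_def by simp

lemma In_nonneg: "In c P \<ge> 0"
  unfolding In_def
proof (rule sum_nonneg)
  fix u assume "u \<in> sub c - {c}"
  then have "w u > 0" using sub_notr w_pos by blast
  then show "w u * g (cnt u P) \<ge> 0" using g_nonneg by simp
qed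

lemma cnt_single: "cnt u [x] = (if desc x u then 1 else 0)"
  unfolding cnt_def by simp

lemma In_single: assumes "desc x c" shows "In c [x] = 2 * Wt c - (D x - D c)"
proof -
  have "In c [x] = (\<Sum>u \<in> sub c - {c}. 2 * w u - (if desc x u then w u else 0))"
    unfolding In_def cnt_single g_def by (rule sum.cong) auto
  also have "\<dots> = 2 * Wt c - (\<Sum>u \<in> sub c - {c}. if desc x u then w u else 0)"
    unfolding Wt_def by (simp add: sum_subtractf sum_distrib_left)
  also have "(\<Sum>u \<in> sub c - {c}. if desc x u then w u else 0) = (\<Sum>u \<in> {u \<in> sub c - {c}. desc x u}. w u)"
    by (rule sum.inter_filter[symmetric]) (simp add: sub_fin)
  also have "{u \<in> sub c - {c}. desc x u} = {u. desc x u \<and> desc u c \<and> u \<noteq> c}"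
    unfolding sub_def by auto
  also have "(\<Sum>u \<in> {u. desc x u \<and> desc u c \<and> u \<noteq> c}. w u) = D x - D c"
    using path_sum[OF assms] .
  finally show ?thesis .
qed

end

context lctx begin

definition Claim :: "'a \<Rightarrow> real \<Rightarrow> bool" where
  "Claim v X \<longleftrightarrow> (\<forall>P. cnt v P \<ge> 1 \<longrightarrow> X + real (lk v) * (q + D v) \<le> In v P + real (cnt v P) * (q + D v))"

lemma ch_facts: "c \<in> ch v \<Longrightarrow> c \<in> V \<and> c \<noteq> r \<and> par c = v \<and> v \<in> V \<and> D c = w c + D v"
  using ch_iff ch_desc D_par by metis

lemma core:
  assumes vV: "v \<in> V" and IH: "\<forall>c \<in> ch v. Claim c (X c)"
  shows "Claim v (\<Sum>c \<in> ch v. real (lk c) * w c + X c + (if ret v c then D (lul c) - D v else 0))"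
  unfolding Claim_def
proof (intro allI impI)
  fix P assume cP: "cnt v P \<ge> 1"
  define K where "K = q + D v"
  have K0: "K \<ge> 0" using q_nonneg D_nonneg[OF vV] K_def by simp
  have cK: "real (cnt v P) * K \<ge> K" using cP K0 by (simp add: mult_le_cancel_right1)
  show "(\<Sum>c \<in> ch v. real (lk c) * w c + X c + (if ret v c then D (lul c) - D v else 0)) + real (lk v) * (q + D v)
        \<le> In v P + real (cnt v P) * (q + D v)"
  proof (cases "ch v = {}")
    case True
    have "lk v = 1"
    proof (cases "v = r")
      case True
      then show ?thesis using lab_lk'[OF vV] \<open>ch v = {}\<close> by simp
    next
      case False
      then show ?thesis using lab_leaf[OF vV False] \<open>ch v = {}\<close> by simp
    qed
    then show ?thesis using True In_nonneg[of v P] cK unfolding K_def by simp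
  next
    case False
    obtain u0 where u0: "u0 \<in> ch v" "luc v = Some u0" "\<forall>c \<in> ch v. D (lul c) \<le> D (lul u0)"
      using lab_luc'[OF vV False] by blast
    define \<delta> where "\<delta> c = K - (D (lul c) - D v)" for c
    define A where "A c = X c + real (lk c) * (K + w c)" for c
    define L where "L c = w c * g (cnt c P) + In c P + real (cnt c P) * K" for c
    define Bc where "Bc c = A c - (if ret v c then \<delta> c else 0)" for c
    have retd: "c \<in> ch v \<Longrightarrow> ret v c \<longleftrightarrow> c \<noteq> u0 \<and> \<delta> c \<ge> 0" for c
      using ret_iff[of c v] u0(2) unfolding \<delta>_def K_def by auto
    have Ai: "c \<in> ch v \<Longrightarrow> cnt c P \<ge> 1 \<Longrightarrow> A c \<le> In c P + real (cnt c P) * (K + w c)" for c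
    proof -
      assume c: "c \<in> ch v" "cnt c P \<ge> 1"
      have "X c + real (lk c) * (q + D c) \<le> In c P + real (cnt c P) * (q + D c)"
        using IH c unfolding Claim_def by blast
      then show ?thesis using ch_facts[OF c(1)] unfolding A_def K_def by (simp add: algebra_simps)
    qed
    have Aii: "c \<in> ch v \<Longrightarrow> A c \<le> 2 * Wt c + 2 * w c + \<delta> c" for c
    proof -
      assume c: "c \<in> ch v"
      have dl: "desc (lul c) c" using lul_ch_desc[OF c] by simp
      have c1: "cnt c [lul c] = 1" using dl by (simp add: cnt_single)
      have "X c + real (lk c) * (q + D c) \<le> In c [lul c] + real (cnt c [lul c]) * (q + D c)"
        using IH c c1 unfolding Claim_def by (metis order_refl)
      then show ?thesis using ch_facts[OF c] In_single[OF dl] c1 unfolding A_def K_def \<delta>_def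
        by (simp add: algebra_simps)
    qed
    have Lpos: "c \<in> ch v \<Longrightarrow> cnt c P \<ge> 1 \<Longrightarrow> L c = In c P + real (cnt c P) * (K + w c)" for c
      unfolding L_def g_def by (simp add: algebra_simps)
    have Lzero: "c \<in> ch v \<Longrightarrow> cnt c P = 0 \<Longrightarrow> L c = 2 * w c + 2 * Wt c" for c
      unfolding L_def g_def using In_zero by simp
    have lkp: "c \<in> ch v \<Longrightarrow> lk c \<ge> 1" for c using lk_pos ch_facts by blast
    have rlk: "real (lk v) = (\<Sum>c \<in> ch v. real (lk c) - (if ret v c then 1 else 0))"
    proof -
      have "real (lk v) = real (\<Sum>c \<in> ch v. lk c - (if ret v c then 1 else 0))" using lk_rel[OF vV False] by simp
      also have "\<dots> = (\<Sum>c \<in> ch v. real (lk c - (if ret v c then 1 else 0)))" by simp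
      also have "\<dots> = (\<Sum>c \<in> ch v. real (lk c) - (if ret v c then 1 else 0))"
        by (rule sum.cong) (use lkp in \<open>auto simp: of_nat_diff\<close>)
      finally show ?thesis .
    qed
    have lhs: "(\<Sum>c \<in> ch v. real (lk c) * w c + X c + (if ret v c then D (lul c) - D v else 0)) + real (lk v) * (q + D v)
        = (\<Sum>c \<in> ch v. Bc c)"
    proof -
      have "real (lk v) * (q + D v) = (\<Sum>c \<in> ch v. (real (lk c) - (if ret v c then 1 else 0)) * K)"
        unfolding rlk K_def by (simp add: sum_distrib_right)
      then have "(\<Sum>c \<in> ch v. real (lk c) * w c + X c + (if ret v c then D (lul c) - D v else 0)) + real (lk v) * (q + D v)
         = (\<Sum>c \<in> ch v. real (lk c) * w c + X c + (if ret v c then D (lul c) - D v else 0) + (real (lk c) - (if ret v c then 1 else 0)) * K)"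
        by (simp add: sum.distrib)
      also have "\<dots> = (\<Sum>c \<in> ch v. Bc c)"
        by (rule sum.cong) (auto simp: Bc_def A_def \<delta>_def algebra_simps)
      finally show ?thesis .
    qed
    define E where "E = real (cnt v P) - (\<Sum>c \<in> ch v. real (cnt c P))"
    have E0: "E \<ge> 0" using cnt_decomp[OF vV, of P] unfolding E_def
      by (metis diff_ge_0_iff_ge of_nat_le_iff of_nat_sum)
    have rhs: "In v P + real (cnt v P) * (q + D v) = (\<Sum>c \<in> ch v. L c) + E * K"
    proof -
      have "(\<Sum>c \<in> ch v. L c) = (\<Sum>c \<in> ch v. w c * g (cnt c P) + In c P) + (\<Sum>c \<in> ch v. real (cnt c P)) * K"
        unfolding L_def by (simp add: sum.distrib sum_distrib_right)
      then show ?thesis unfolding In_decomp[OF vV] E_def K_def by (simp add: algebra_simps)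
    qed
    have gen: "c \<in> ch v \<Longrightarrow> Bc c \<le> L c + (if c = u0 \<and> cnt u0 P = 0 then \<delta> u0 else 0)" for c
    proof -
      assume c: "c \<in> ch v"
      show ?thesis
      proof (cases "cnt c P \<ge> 1")
        case True
        have "Bc c \<le> A c" unfolding Bc_def using retd[OF c] by auto
        also have "\<dots> \<le> L c" using Ai[OF c True] Lpos[OF c True] by simp
        finally show ?thesis using True by auto
      next
        case False
        then have z: "cnt c P = 0" by simp
        have a2: "A c \<le> L c + \<delta> c" using Aii[OF c] Lzero[OF c z] by simp
        show ?thesis
        proof (cases "ret v c")
          case True
          then show ?thesis using a2 retd[OF c] z unfolding Bc_def by auto
        next
          case nr: False
          show ?thesis
          proof (cases "c = u0")
            case True
            then show ?thesis using a2 z nr unfolding Bc_def by simp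
          next
            case False
            then have "\<delta> c < 0" using retd[OF c] nr by simp
            then show ?thesis using a2 nr False unfolding Bc_def by simp
          qed
        qed
      qed
    qed
    have sumL: "(\<Sum>c \<in> ch v. L c + (if c = u0 \<and> cnt u0 P = 0 then \<delta> u0 else 0))
        = (\<Sum>c \<in> ch v. L c) + (if cnt u0 P = 0 then \<delta> u0 else 0)"
    proof -
      have "(\<Sum>c \<in> ch v. (if c = u0 \<and> cnt u0 P = 0 then \<delta> u0 else 0)) = (if cnt u0 P = 0 then \<delta> u0 else 0)"
        using u0(1) ch_fin by (cases "cnt u0 P = 0") (simp_all add: sum.delta)
      then show ?thesis by (simp add: sum.distrib)
    qed
    have main: "(\<Sum>c \<in> ch v. Bc c) \<le> (\<Sum>c \<in> ch v. L c) + E * K"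
    proof (cases "cnt u0 P = 0 \<and> \<delta> u0 > 0")
      case False
      have "(\<Sum>c \<in> ch v. Bc c) \<le> (\<Sum>c \<in> ch v. L c + (if c = u0 \<and> cnt u0 P = 0 then \<delta> u0 else 0))"
        using gen by (rule sum_mono)
      also have "\<dots> \<le> (\<Sum>c \<in> ch v. L c)" using sumL False by auto
      finally show ?thesis using E0 K0 by (simp add: add_increasing2)
    next
      case True
      show ?thesis
      proof (cases "\<exists>c' \<in> ch v. cnt c' P \<ge> 1")
        case True
        then obtain c' where c': "c' \<in> ch v" "cnt c' P \<ge> 1" by blast
        have ne: "c' \<noteq> u0" using c' \<open>cnt u0 P = 0 \<and> \<delta> u0 > 0\<close> by auto
        have dd: "\<delta> c' \<ge> \<delta> u0" using u0(3) c' unfolding \<delta>_def by auto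
        have rc: "ret v c'" using retd[OF c'(1)] ne dd \<open>cnt u0 P = 0 \<and> \<delta> u0 > 0\<close> by simp
        have g2: "c \<in> ch v \<Longrightarrow> Bc c \<le> L c + (if c = u0 \<and> cnt u0 P = 0 then \<delta> u0 else 0) - (if c = c' then \<delta> u0 else 0)" for c
        proof (cases "c = c'")
          case True
          have "Bc c' = A c' - \<delta> c'" unfolding Bc_def using rc by simp
          also have "\<dots> \<le> L c' - \<delta> u0" using Ai[OF c'] Lpos[OF c'] dd by simp
          finally show ?thesis using True ne by simp
        next
          case False
          assume "c \<in> ch v"
          then show ?thesis using gen False by simp
        qed
        have "(\<Sum>c \<in> ch v. Bc c) \<le> (\<Sum>c \<in> ch v. L c + (if c = u0 \<and> cnt u0 P = 0 then \<delta> u0 else 0) - (if c = c' then \<delta> u0 else 0))"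
          using g2 by (rule sum_mono)
        also have "\<dots> = (\<Sum>c \<in> ch v. L c + (if c = u0 \<and> cnt u0 P = 0 then \<delta> u0 else 0)) - \<delta> u0"
          using c'(1) ch_fin by (simp add: sum_subtractf sum.delta)
        also have "\<dots> = (\<Sum>c \<in> ch v. L c)" using sumL \<open>cnt u0 P = 0 \<and> \<delta> u0 > 0\<close> by simp
        finally show ?thesis using E0 K0 by (simp add: add_increasing2)
      next
        case False
        then have "\<forall>c \<in> ch v. cnt c P = 0" by (simp add: not_le)
        then have "E = real (cnt v P)" unfolding E_def by simp
        then have EK: "E * K \<ge> K" using cK by simp
        have "D (lul u0) \<ge> D v" using lul_ch_desc[OF u0(1)] D_mono by blast
        then have "\<delta> u0 \<le> K" unfolding \<delta>_def by simp
        have "(\<Sum>c \<in> ch v. Bc c) \<le> (\<Sum>c \<in> ch v. L c + (if c = u0 \<and> cnt u0 P = 0 then \<delta> u0 else 0))"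
          using gen by (rule sum_mono)
        also have "\<dots> = (\<Sum>c \<in> ch v. L c) + \<delta> u0" using sumL \<open>cnt u0 P = 0 \<and> \<delta> u0 > 0\<close> by simp
        finally show ?thesis using EK \<open>\<delta> u0 \<le> K\<close> by simp
      qed
    qed
    show ?thesis using lhs rhs main by simp
  qed
qed

end

context tctx begin

definition Bm :: "nat \<Rightarrow> 'v \<Rightarrow> nat \<Rightarrow> 'v move list" where
  "Bm j x n = map (\<lambda>i. Move j ((par ^^ i) x)) [1..<Suc n]"

lemma Bm_Suc: "Bm j x (Suc n) = Bm j x n @ [Move j ((par ^^ Suc n) x)]"
  unfolding Bm_def by simp

lemma Bm_run: "j < length pos \<Longrightarrow> run r pos (Bm j x n) = (if n = 0 then pos else pos[j := (par ^^ n) x])"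
proof (induction n)
  case 0 then show ?case unfolding Bm_def by simp
next
  case (Suc n)
  show ?case unfolding Bm_Suc run_append using Suc by auto
qed

lemma Bm_nth: "j < length pos \<Longrightarrow> pos ! j = x \<Longrightarrow> run r pos (Bm j x n) ! j = (par ^^ n) x"
  using Bm_run by auto

lemma Bm_len: "j < length pos \<Longrightarrow> length (run r pos (Bm j x n)) = length pos"
  using Bm_run by auto

lemma Bm_cost: assumes "j < length pos" "pos ! j = x" "x \<in> V"
  shows "n \<le> ht x \<Longrightarrow> move_cost wt q r pos (Bm j x n) = D x - D ((par ^^ n) x)"
proof (induction n)
  case 0 then show ?case unfolding Bm_def by simp
next
  case (Suc n)
  let ?y = "(par ^^ n) x"
  have yV: "?y \<in> V" and yr: "?y \<noteq> r" using iter_V[OF assms(3)] iter_ne_r[OF assms(3)] Suc.prems by auto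
  have nth: "run r pos (Bm j x n) ! j = ?y" using Bm_nth assms by blast
  have "move_cost wt q r pos (Bm j x (Suc n)) = move_cost wt q r pos (Bm j x n) + wt ?y (par ?y)"
    unfolding Bm_Suc move_cost_append using nth by simp
  also have "wt ?y (par ?y) = w ?y" unfolding twt_def using yr by simp
  finally show ?case using Suc D_par[OF yV yr] by simp
qed

lemma Bm_valid: assumes "j < length pos" "pos ! j = x" "x \<in> V"
  shows "n \<le> ht x \<Longrightarrow> valid_moves adj r pos (Bm j x n)"
proof (induction n)
  case 0 then show ?case unfolding Bm_def by simp
next
  case (Suc n)
  let ?y = "(par ^^ n) x"
  have yV: "?y \<in> V" and yr: "?y \<noteq> r" using iter_V[OF assms(3)] iter_ne_r[OF assms(3)] Suc.prems by auto
  have nth: "run r pos (Bm j x n) ! j = ?y" using Bm_nth assms by blast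
  have len: "j < length (run r pos (Bm j x n))" using Bm_len assms by simp
  have "adj ?y (par ?y)" unfolding tadj_def using yV yr parV by auto
  then show ?case unfolding Bm_Suc valid_append using Suc nth len by simp
qed

end

context lctx begin

abbreviation "CE \<equiv> costexpl V r par w q lk lul luc"
abbreviation "CL \<equiv> cexpl_loop V r par w q lk lul luc"

definition fc :: "'a \<Rightarrow> ('a \<Rightarrow> real) \<Rightarrow> 'a \<Rightarrow> real" where
  "fc v X c = real (lk c) * w c + X c + (if ret v c then D (lul c) - D v else 0)"

lemma wt_ch: "c \<in> ch v \<Longrightarrow> wt v c = w c"
proof -
  assume c: "c \<in> ch v"
  have a: "adj v c" unfolding tadj_def using ch_facts[OF c] by auto
  show ?thesis using wt_abs[OF a] ch_facts[OF c] w_pos by (simp add: abs_of_pos)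
qed

lemma ret_path:
  assumes c: "c \<in> ch v"
    and j: "j < length pos" "pos ! j = lul c"
    and n: "(par ^^ n) (lul c) = v" "\<forall>m<n. (par ^^ m) (lul c) \<noteq> v"
  shows "move_cost wt q r pos (Bm j (lul c) n) = D (lul c) - D v \<and> valid_moves adj r pos (Bm j (lul c) n)"
proof -
  have d: "desc (lul c) v" using lul_ch_desc[OF c] by simp
  then obtain n' where n': "n' \<le> ht (lul c)" "(par ^^ n') (lul c) = v" unfolding desc_def by auto
  have "n \<le> n'" using n(2) n'(2) not_le by blast
  then have nh: "n \<le> ht (lul c)" using n' by simp
  have xV: "lul c \<in> V" using d desc_V by auto
  show ?thesis using Bm_cost[OF j xV nh] Bm_valid[OF j xV nh] n(1) by simp
qed

lemma ce_props:
  shows "CE v pos S \<Longrightarrow> v \<in> V \<longrightarrow> valid_moves adj r pos S \<and> sub v \<subseteq> insert v (visited r pos S) \<and> Claim v (move_cost wt q r pos S)"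
    and "CL v cs pos S \<Longrightarrow> v \<in> V \<longrightarrow> set cs \<subseteq> ch v \<longrightarrow> distinct cs \<longrightarrow>
          valid_moves adj r pos S \<and> (\<Union>c \<in> set cs. sub c) \<subseteq> visited r pos S \<and>
          (\<exists>X. (\<forall>c \<in> set cs. Claim c (X c)) \<and> move_cost wt q r pos S = (\<Sum>c \<leftarrow> cs. fc v X c))"
proof (induction rule: costexpl_cexpl_loop.inducts)
  case (ce_node cs v pos S)
  show ?case
  proof
    assume vV: "v \<in> V"
    have sc: "set cs = ch v" using ce_node(2) ch_eq by simp
    obtain X where X: "\<forall>c \<in> set cs. Claim c (X c)" "move_cost wt q r pos S = (\<Sum>c \<leftarrow> cs. fc v X c)"
      and val: "valid_moves adj r pos S" and vis: "(\<Union>c \<in> set cs. sub c) \<subseteq> visited r pos S"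
      using ce_node(5) vV sc ce_node(1) by auto
    have "move_cost wt q r pos S = (\<Sum>c \<in> ch v. fc v X c)"
      using X(2) sum_list_distinct_conv_sum_set[OF ce_node(1)] sc by simp
    then have cl: "Claim v (move_cost wt q r pos S)" using core[OF vV, of X] X(1) sc unfolding fc_def by simp
    have "sub v \<subseteq> insert v (visited r pos S)" using sub_decomp[OF vV] vis sc by auto
    then show "valid_moves adj r pos S \<and> sub v \<subseteq> insert v (visited r pos S) \<and> Claim v (move_cost wt q r pos S)"
      using val cl by simp
  qed
next
  case (ce_nil v pos)
  then show ?case by simp
next
  case (ce_cons I c pos v M R B cs S)
  have hI: "distinct I" and hlen: "length I = lk c" and hpos: "\<forall>i\<in>set I. i < length pos \<and> pos ! i = v"
    and hM: "M = map (\<lambda>i. Move i c) I" using ce_cons by blast+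
  have hB: "if Some c \<noteq> luc v \<and> gdist adj wt v (lul c) \<le> gdist adj wt r v + q
         then \<exists>j n. j < length (run r pos (M @ R)) \<and> run r pos (M @ R) ! j = lul c \<and>
                    (par ^^ n) (lul c) = v \<and> (\<forall>m<n. (par ^^ m) (lul c) \<noteq> v) \<and>
                    B = map (\<lambda>i. Move j ((par ^^ i) (lul c))) [1..<Suc n]
         else B = []" using ce_cons by blast
  have hIH1: "c \<in> V \<longrightarrow> valid_moves adj r (run r pos M) R \<and> sub c \<subseteq> insert c (visited r (run r pos M) R) \<and> Claim c (move_cost wt q r (run r pos M) R)"
    using ce_cons by blast
  have hIH2: "v \<in> V \<longrightarrow> set cs \<subseteq> ch v \<longrightarrow> distinct cs \<longrightarrow>
          valid_moves adj r (run r pos (M @ R @ B)) S \<and> (\<Union>c \<in> set cs. sub c) \<subseteq> visited r (run r pos (M @ R @ B)) S \<and>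
          (\<exists>X. (\<forall>c \<in> set cs. Claim c (X c)) \<and> move_cost wt q r (run r pos (M @ R @ B)) S = (\<Sum>c \<leftarrow> cs. fc v X c))"
    using ce_cons by blast
  show ?case
  proof (intro impI)
    assume vV: "v \<in> V" and sub_cs: "set (c # cs) \<subseteq> ch v" and dcs: "distinct (c # cs)"
    have cch: "c \<in> ch v" using sub_cs by simp
    have cV: "c \<in> V" using ch_facts[OF cch] by simp
    let ?pM = "run r pos M"
    let ?pR = "run r pos (M @ R)"
    let ?pB = "run r pos (M @ R @ B)"
    have Ii: "\<forall>i \<in> set I. i < length pos" using hpos by simp
    have pM: "?pM = map (\<lambda>k. if k \<in> set I then c else pos ! k) [0..<length pos]"
      using multi_move[OF hI Ii] hM by simp
    have "I \<noteq> []" using hlen lk_pos[OF cV] by auto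
    then obtain i0 where i0: "i0 \<in> set I" by (cases I) auto
    have i0l: "i0 < length pos" using i0 Ii by simp
    have "?pM ! i0 = c" "i0 < length ?pM" using pM i0 i0l by simp_all
    then have c_in: "c \<in> set ?pM" by (metis nth_mem)
    have costM: "move_cost wt q r pos M = real (lk c) * w c"
      using multi_move_cost[OF hI hpos] hlen hM wt_ch[OF cch] by simp
    have validM: "valid_moves adj r pos M"
      using multi_move_valid[OF hI hpos] hM ch_facts[OF cch] unfolding tadj_def by auto
    have IH1: "valid_moves adj r ?pM R" "sub c \<subseteq> insert c (visited r ?pM R)" "Claim c (move_cost wt q r ?pM R)"
      using hIH1 cV by auto
    have pR: "?pR = run r ?pM R" by (simp add: run_append)
    have BB: "move_cost wt q r ?pR B = (if ret v c then D (lul c) - D v else 0) \<and> valid_moves adj r ?pR B"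
    proof (cases "ret v c")
      case True
      then obtain j n where jn: "j < length ?pR" "?pR ! j = lul c" "(par ^^ n) (lul c) = v"
        "\<forall>m<n. (par ^^ m) (lul c) \<noteq> v" "B = map (\<lambda>i. Move j ((par ^^ i) (lul c))) [1..<Suc n]"
        using hB unfolding ret_def by (auto split: if_splits)
      have "B = Bm j (lul c) n" unfolding Bm_def jn(5) ..
      then show ?thesis using ret_path[OF cch jn(1,2,3,4)] True by simp
    next
      case False
      then have "B = []" using hB unfolding ret_def by (auto split: if_splits)
      then show ?thesis using False by simp
    qed
    have IH2: "valid_moves adj r ?pB S" "(\<Union>c \<in> set cs. sub c) \<subseteq> visited r ?pB S"
      "\<exists>X. (\<forall>c \<in> set cs. Claim c (X c)) \<and> move_cost wt q r ?pB S = (\<Sum>c \<leftarrow> cs. fc v X c)"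
      using hIH2 vV sub_cs dcs by auto
    obtain X where X: "\<forall>c \<in> set cs. Claim c (X c)" "move_cost wt q r ?pB S = (\<Sum>c \<leftarrow> cs. fc v X c)"
      using IH2(3) by blast
    have pB: "?pB = run r ?pR B" by (simp add: run_append)
    have valid: "valid_moves adj r pos (M @ R @ B @ S)"
      unfolding valid_append using validM IH1(1) BB IH2(1) pR pB by (simp add: run_append)
    have vis_all: "visited r pos (M @ R @ B @ S) = visited r pos M \<union> (visited r ?pM R \<union> (visited r ?pR B \<union> visited r ?pB S))"
      unfolding visited_append using pR pB by (simp add: run_append)
    have c_vis: "c \<in> visited r ?pM R" using c_in visited_pos[of ?pM r R] by blast
    have vis: "(\<Union>c' \<in> set (c # cs). sub c') \<subseteq> visited r pos (M @ R @ B @ S)"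
      using vis_all IH1(2) c_vis IH2(2) by auto
    define X' where "X' = X(c := move_cost wt q r ?pM R)"
    have cnot: "c \<notin> set cs" using dcs by simp
    have X'cl: "\<forall>c' \<in> set (c # cs). Claim c' (X' c')" using X(1) IH1(3) cnot unfolding X'_def by auto
    have sumeq: "(\<Sum>c' \<leftarrow> cs. fc v X' c') = (\<Sum>c' \<leftarrow> cs. fc v X c')"
      by (rule arg_cong[where f=sum_list], rule map_cong) (use cnot in \<open>auto simp: X'_def fc_def\<close>)
    have "move_cost wt q r pos (M @ R @ B @ S) = move_cost wt q r pos M + (move_cost wt q r ?pM R +
            (move_cost wt q r ?pR B + move_cost wt q r ?pB S))"
      unfolding move_cost_append using pR pB by (simp add: run_append)
    also have "\<dots> = (\<Sum>c' \<leftarrow> c # cs. fc v X' c')"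
      using costM BB X(2) sumeq unfolding fc_def X'_def by simp
    finally show "valid_moves adj r pos (M @ R @ B @ S) \<and> (\<Union>c' \<in> set (c # cs). sub c') \<subseteq> visited r pos (M @ R @ B @ S) \<and>
          (\<exists>X. (\<forall>c' \<in> set (c # cs). Claim c' (X c')) \<and> move_cost wt q r pos (M @ R @ B @ S) = (\<Sum>c' \<leftarrow> c # cs. fc v X c'))"
      using valid vis X'cl by blast
  qed
qed

end

context lctx begin

definition Ex_prop :: "'a \<Rightarrow> bool" where
  "Ex_prop v \<longleftrightarrow> (\<forall>pos J. finite J \<longrightarrow> J \<subseteq> {i. i < length pos \<and> pos ! i = v} \<longrightarrow> card J \<ge> lk v \<longrightarrow>
     (\<exists>S. CE v pos S \<and> length (run r pos S) = length pos \<and>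
          (\<forall>i < length pos. i \<notin> J \<longrightarrow> run r pos S ! i = pos ! i) \<and>
          (v \<noteq> r \<longrightarrow> (\<exists>j \<in> J. run r pos S ! j = lul v))))"

abbreviation "rt v c \<equiv> (if ret v c then 1 else 0 :: nat)"

lemma loop_ex:
  assumes vV: "v \<in> V" and IHc: "\<forall>c \<in> ch v. Ex_prop c"
  shows "distinct cs \<Longrightarrow> set cs \<subseteq> ch v \<Longrightarrow> (cs \<noteq> [] \<longrightarrow> luc v = Some (last cs)) \<Longrightarrow>
    finite J \<Longrightarrow> J \<subseteq> {i. i < length pos \<and> pos ! i = v} \<Longrightarrow> card J \<ge> (\<Sum>c \<leftarrow> cs. lk c - rt v c) \<Longrightarrow>
    \<exists>S. CL v cs pos S \<and> length (run r pos S) = length pos \<and>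
        (\<forall>i < length pos. i \<notin> J \<longrightarrow> run r pos S ! i = pos ! i) \<and>
        (cs \<noteq> [] \<longrightarrow> (\<exists>j \<in> J. run r pos S ! j = lul (last cs)))"
proof (induction cs arbitrary: pos J)
  case Nil
  show ?case by (intro exI[of _ "[]"]) (auto intro: ce_nil)
next
  case (Cons c cs)
  have cch: "c \<in> ch v" using Cons.prems by simp
  have cV: "c \<in> V" and cr: "c \<noteq> r" using ch_facts[OF cch] by auto
  have lkc: "lk c \<ge> 1" using lk_pos[OF cV] .
  have rest_ge: "cs \<noteq> [] \<Longrightarrow> (\<Sum>c \<leftarrow> cs. lk c - rt v c) \<ge> 1"
  proof -
    assume ne: "cs \<noteq> []"
    have l: "last cs \<in> ch v" "luc v = Some (last cs)" using Cons.prems ne by auto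
    have "\<not> ret v (last cs)" using ret_iff[OF l(1)] l(2) by simp
    then have "lk (last cs) - rt v (last cs) \<ge> 1" using lk_pos ch_facts[OF l(1)] by simp
    moreover have "lk (last cs) - rt v (last cs) \<le> (\<Sum>c \<leftarrow> cs. lk c - rt v c)"
      using ne by (intro member_le_sum_list) auto
    ultimately show ?thesis by simp
  qed
  have nr_last: "cs = [] \<Longrightarrow> \<not> ret v c" using Cons.prems ret_iff[OF cch] by auto
  have cardJ: "card J \<ge> lk c - rt v c + (\<Sum>c \<leftarrow> cs. lk c - rt v c)" using Cons.prems by simp
  have cJ: "card J \<ge> lk c"
  proof (cases "cs = []")
    case True then show ?thesis using cardJ nr_last by simp
  next
    case False then show ?thesis using cardJ rest_ge by (cases "ret v c") auto
  qed
  obtain I' where I': "I' \<subseteq> J" "card I' = lk c" "finite I'" using obtain_subset_with_card_n[OF cJ] by blast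
  obtain I where I: "set I = I'" "distinct I" using finite_distinct_list[OF I'(3)] by blast
  have lenI: "length I = lk c" using I I'(2) distinct_card by metis
  have posI: "\<forall>i\<in>set I. i < length pos \<and> pos ! i = v" using I I'(1) Cons.prems by auto
  define M where "M = map (\<lambda>i. Move i c) I"
  define pM where "pM = run r pos M"
  have pM_eq: "pM = map (\<lambda>k. if k \<in> set I then c else pos ! k) [0..<length pos]"
  proof -
    have "\<forall>i\<in>set I. i < length pos" using posI by simp
    then show ?thesis unfolding pM_def M_def by (rule multi_move[OF I(2)])
  qed
  have lpM: "length pM = length pos" using pM_eq by simp
  have pMi: "i < length pos \<Longrightarrow> pM ! i = (if i \<in> I' then c else pos ! i)" for i
    using pM_eq I(1) by simp
  have EPc: "Ex_prop c" using IHc cch by blast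
  have I'at: "I' \<subseteq> {i. i < length pM \<and> pM ! i = c}" using pMi lpM posI I(1) by auto
  obtain R where R: "CE c pM R" "length (run r pM R) = length pM"
      "\<forall>i < length pM. i \<notin> I' \<longrightarrow> run r pM R ! i = pM ! i" "\<exists>j \<in> I'. run r pM R ! j = lul c"
    using EPc[unfolded Ex_prop_def, rule_format, OF I'(3) I'at] I'(2) cr by auto
  define pR where "pR = run r pM R"
  obtain j where j: "j \<in> I'" "pR ! j = lul c" using R(4) pR_def by blast
  have jl: "j < length pos" using j I'(1) Cons.prems by auto
  have lpR: "length pR = length pos" using R(2) lpM pR_def by simp
  have pRi: "i < length pos \<Longrightarrow> i \<notin> I' \<Longrightarrow> pR ! i = pos ! i" for i using R(3) pMi lpM pR_def by simp
  have pR_run: "run r pos (M @ R) = pR" unfolding pR_def pM_def by (simp add: run_append)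
  obtain B J' where B: "if Some c \<noteq> luc v \<and> gdist adj wt v (lul c) \<le> gdist adj wt r v + q
         then \<exists>j n. j < length (run r pos (M @ R)) \<and> run r pos (M @ R) ! j = lul c \<and>
                    (par ^^ n) (lul c) = v \<and> (\<forall>m<n. (par ^^ m) (lul c) \<noteq> v) \<and>
                    B = map (\<lambda>i. Move j ((par ^^ i) (lul c))) [1..<Suc n]
         else B = []"
    and J': "J' \<subseteq> J" "finite J'" "card J' = card J - lk c + rt v c" "J' \<inter> I' \<subseteq> {j}" "\<not> ret v c \<Longrightarrow> j \<notin> J'"
    and pB: "length (run r pR B) = length pos" "\<forall>i \<in> J'. run r pR B ! i = v"
            "\<forall>i < length pos. i \<noteq> j \<longrightarrow> run r pR B ! i = pR ! i"
            "\<not> ret v c \<Longrightarrow> run r pR B = pR"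
  proof (cases "ret v c")
    case True
    have d: "desc (lul c) v" using lul_ch_desc[OF cch] by simp
    then have ex: "\<exists>n. (par ^^ n) (lul c) = v" unfolding desc_def by auto
    define n where "n = (LEAST n. (par ^^ n) (lul c) = v)"
    have n1: "(par ^^ n) (lul c) = v" using LeastI_ex[OF ex] n_def by simp
    have n2: "\<forall>m<n. (par ^^ m) (lul c) \<noteq> v" using not_less_Least n_def by blast
    have n0: "n \<noteq> 0"
    proof
      assume "n = 0"
      then have "lul c = v" using n1 by simp
      then show False using lul_ch_desc[OF cch] ch_not_desc[OF cch] by simp
    qed
    define B where "B = map (\<lambda>i. Move j ((par ^^ i) (lul c))) [1..<Suc n]"
    have Bm: "B = Bm j (lul c) n" unfolding B_def Bm_def ..
    have runB: "run r pR B = pR[j := v]" using Bm_run[of j pR "lul c" n] jl lpR n0 n1 Bm by simp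
    define J' where "J' = insert j (J - I')"
    have fJ: "finite J" using Cons.prems by simp
    have cJ': "card J' = card J - lk c + 1"
    proof -
      have "card (J - I') = card J - lk c" using I' fJ by (simp add: card_Diff_subset)
      moreover have "j \<notin> J - I'" using j by simp
      ultimately show ?thesis unfolding J'_def using fJ by simp
    qed
    show ?thesis
    proof (rule that[of B J'])
      show "if Some c \<noteq> luc v \<and> gdist adj wt v (lul c) \<le> gdist adj wt r v + q
         then \<exists>j n. j < length (run r pos (M @ R)) \<and> run r pos (M @ R) ! j = lul c \<and>
                    (par ^^ n) (lul c) = v \<and> (\<forall>m<n. (par ^^ m) (lul c) \<noteq> v) \<and>
                    B = map (\<lambda>i. Move j ((par ^^ i) (lul c))) [1..<Suc n]
         else B = []"
        using True unfolding ret_def pR_run using jl lpR j n1 n2 B_def by auto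
      show "J' \<subseteq> J" using j I' unfolding J'_def by auto
      show "finite J'" using fJ unfolding J'_def by simp
      show "card J' = card J - lk c + rt v c" using cJ' True by simp
      show "J' \<inter> I' \<subseteq> {j}" unfolding J'_def by auto
      show "\<not> ret v c \<Longrightarrow> j \<notin> J'" using True by simp
      show "length (run r pR B) = length pos" using runB lpR by simp
      show "\<forall>i \<in> J'. run r pR B ! i = v"
      proof
        fix i assume i: "i \<in> J'"
        show "run r pR B ! i = v"
        proof (cases "i = j")
          case True then show ?thesis using runB jl lpR by simp
        next
          case False
          then have "i \<in> J" "i \<notin> I'" using i unfolding J'_def by auto
          then show ?thesis using runB False pRi Cons.prems by auto
        qed
      qed
      show "\<forall>i < length pos. i \<noteq> j \<longrightarrow> run r pR B ! i = pR ! i" using runB by simp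
      show "\<not> ret v c \<Longrightarrow> run r pR B = pR" using True by simp
    qed
  next
    case False
    define J' where "J' = J - I'"
    have fJ: "finite J" using Cons.prems by simp
    show ?thesis
    proof (rule that[of "[]" J'])
      show "if Some c \<noteq> luc v \<and> gdist adj wt v (lul c) \<le> gdist adj wt r v + q
         then \<exists>j n. j < length (run r pos (M @ R)) \<and> run r pos (M @ R) ! j = lul c \<and>
                    (par ^^ n) (lul c) = v \<and> (\<forall>m<n. (par ^^ m) (lul c) \<noteq> v) \<and>
                    [] = map (\<lambda>i. Move j ((par ^^ i) (lul c))) [1..<Suc n]
         else [] = []"
      proof -
        have nc: "\<not> (Some c \<noteq> luc v \<and> gdist adj wt v (lul c) \<le> gdist adj wt r v + q)"
          using False unfolding ret_def .
        show ?thesis by (subst if_not_P[OF nc]) (rule refl)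
      qed
      show "J' \<subseteq> J" unfolding J'_def by auto
      show "finite J'" using fJ unfolding J'_def by simp
      show "card J' = card J - lk c + rt v c" using I' fJ False unfolding J'_def by (simp add: card_Diff_subset)
      show "J' \<inter> I' \<subseteq> {j}" unfolding J'_def by auto
      show "\<not> ret v c \<Longrightarrow> j \<notin> J'" using j(1) unfolding J'_def by simp
      show "length (run r pR []) = length pos" using lpR by simp
      show "\<forall>i \<in> J'. run r pR [] ! i = v" using pRi Cons.prems unfolding J'_def by auto
      show "\<forall>i < length pos. i \<noteq> j \<longrightarrow> run r pR [] ! i = pR ! i" by simp
      show "\<not> ret v c \<Longrightarrow> run r pR [] = pR" by simp
    qed
  qed
  define pB where "pB = run r pR B"
  have pB_run: "run r pos (M @ R @ B) = pB" unfolding pB_def pR_def pM_def by (simp add: run_append)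
  have cJ'2: "card J' \<ge> (\<Sum>c \<leftarrow> cs. lk c - rt v c)" using J'(3) cardJ cJ by simp
  have J'at: "J' \<subseteq> {i. i < length pB \<and> pB ! i = v}"
    using pB(1,2) J'(1) Cons.prems pB_def by auto
  obtain S where S: "CL v cs pB S" "length (run r pB S) = length pB"
      "\<forall>i < length pB. i \<notin> J' \<longrightarrow> run r pB S ! i = pB ! i"
      "cs \<noteq> [] \<longrightarrow> (\<exists>j \<in> J'. run r pB S ! j = lul (last cs))"
    using Cons.IH[of J' pB] Cons.prems J'(2) J'at cJ'2 by auto
  have rtot: "run r pos (M @ R @ B @ S) = run r pB S"
    using pB_run by (metis append.assoc run_append)
  have CLtot: "CL v (c # cs) pos (M @ R @ B @ S)"
  proof (rule ce_cons)
    show "distinct I" by (rule I(2))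
    show "length I = lk c" by (rule lenI)
    show "\<forall>i\<in>set I. i < length pos \<and> pos ! i = v" by (rule posI)
    show "M = map (\<lambda>i. Move i c) I" by (rule M_def)
    show "CE c (run r pos M) R" using R(1) pM_def by simp
    show "if Some c \<noteq> luc v \<and> gdist adj wt v (lul c) \<le> gdist adj wt r v + q
         then \<exists>j n. j < length (run r pos (M @ R)) \<and> run r pos (M @ R) ! j = lul c \<and>
                    (par ^^ n) (lul c) = v \<and> (\<forall>m<n. (par ^^ m) (lul c) \<noteq> v) \<and>
                    B = map (\<lambda>i. Move j ((par ^^ i) (lul c))) [1..<Suc n]
         else B = []" by (rule B)
    show "CL v cs (run r pos (M @ R @ B)) S" using S(1) pB_run by simp
  qed
  have lpB: "length pB = length pos" using pB(1) pB_def by simp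
  show ?case
  proof (intro exI[of _ "M @ R @ B @ S"] conjI)
    show "CL v (c # cs) pos (M @ R @ B @ S)" by (rule CLtot)
    show "length (run r pos (M @ R @ B @ S)) = length pos" using rtot S(2) lpB by simp
    show "\<forall>i < length pos. i \<notin> J \<longrightarrow> run r pos (M @ R @ B @ S) ! i = pos ! i"
    proof (intro allI impI)
      fix i assume i: "i < length pos" "i \<notin> J"
      have "i \<notin> J'" "i \<notin> I'" "i \<noteq> j" using i J'(1) I'(1) j(1) by auto
      then show "run r pos (M @ R @ B @ S) ! i = pos ! i"
        using rtot S(3) lpB i pB(3) pB_def pRi by simp
    qed
    show "c # cs \<noteq> [] \<longrightarrow> (\<exists>j \<in> J. run r pos (M @ R @ B @ S) ! j = lul (last (c # cs)))"
    proof (cases "cs = []")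
      case False
      then obtain j' where "j' \<in> J'" "run r pB S ! j' = lul (last cs)" using S(4) by blast
      then show ?thesis using rtot J'(1) False by auto
    next
      case True
      have nr: "\<not> ret v c" using nr_last True by simp
      have jJ': "j \<notin> J'" using J'(5) nr by simp
      have jB: "pB ! j = lul c" using pB(4) nr j(2) pB_def by simp
      have "run r pos (M @ R @ B @ S) ! j = lul c" using rtot S(3) lpB jl jJ' jB by simp
      then show ?thesis using True j(1) I'(1) by auto
    qed
  qed
qed

end

lemma invokes_run: "run h pos (replicate k Invoke) = pos @ replicate k h"
  by (induction k arbitrary: pos) (auto simp: replicate_app_Cons_same)

lemma invokes_cost: "move_cost wt q h pos (replicate k Invoke) = real k * q"
  by (induction k arbitrary: pos) (auto simp: algebra_simps)

lemma invokes_valid: "valid_moves adj h pos (replicate k Invoke)"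
  by (induction k arbitrary: pos) auto

context lctx begin

lemma ex_all: "v \<in> V \<Longrightarrow> Ex_prop v"
proof (induction v rule: tree_induct)
  case (step v)
  have IHc: "\<forall>c \<in> ch v. Ex_prop c" using step(2) by blast
  show ?case unfolding Ex_prop_def
  proof (intro allI impI)
    fix pos J assume fJ: "finite J" and Jat: "J \<subseteq> {i. i < length pos \<and> pos ! i = v}" and cJ: "lk v \<le> card J"
    show "\<exists>S. CE v pos S \<and> length (run r pos S) = length pos \<and>
          (\<forall>i < length pos. i \<notin> J \<longrightarrow> run r pos S ! i = pos ! i) \<and>
          (v \<noteq> r \<longrightarrow> (\<exists>j \<in> J. run r pos S ! j = lul v))"
    proof (cases "ch v = {}")
      case True
      have ce: "CE v pos []"
        by (rule ce_node[where cs="[]"]) (use True ch_eq in \<open>auto intro: ce_nil\<close>)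
      have last: "v \<noteq> r \<longrightarrow> (\<exists>j \<in> J. run r pos [] ! j = lul v)"
      proof
        assume vr: "v \<noteq> r"
        have l: "lk v = 1" "lul v = v" using lab_leaf[OF step(1) vr True] by auto
        then have "J \<noteq> {}" using cJ by auto
        then obtain j where "j \<in> J" by blast
        then show "\<exists>j \<in> J. run r pos [] ! j = lul v" using Jat l by auto
      qed
      show ?thesis using ce last by (intro exI[of _ "[]"]) auto
    next
      case False
      obtain u0 where u0: "u0 \<in> ch v" "luc v = Some u0" "lul v = lul u0"
        using lab_luc'[OF step(1) False] by blast
      obtain xs where xs: "set xs = ch v - {u0}" "distinct xs"
        using finite_distinct_list[of "ch v - {u0}"] ch_fin by blast
      define cs where "cs = xs @ [u0]"
      have dcs: "distinct cs" using xs unfolding cs_def by simp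
      have scs: "set cs = ch v" using xs u0 unfolding cs_def by auto
      have lcs: "cs \<noteq> [] \<longrightarrow> luc v = Some (last cs)" using u0 unfolding cs_def by simp
      have "(\<Sum>c \<leftarrow> cs. lk c - rt v c) = (\<Sum>c \<in> ch v. lk c - rt v c)"
        using sum_list_distinct_conv_sum_set[OF dcs] scs by simp
      also have "\<dots> = lk v" using lk_rel[OF step(1) False] by simp
      finally have sumcs: "(\<Sum>c \<leftarrow> cs. lk c - rt v c) = lk v" .
      obtain S where S: "CL v cs pos S" "length (run r pos S) = length pos"
        "\<forall>i < length pos. i \<notin> J \<longrightarrow> run r pos S ! i = pos ! i"
        "cs \<noteq> [] \<longrightarrow> (\<exists>j \<in> J. run r pos S ! j = lul (last cs))"
        using loop_ex[OF step(1) IHc dcs _ lcs fJ Jat] scs sumcs cJ by auto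
      have ce: "CE v pos S" by (rule ce_node[OF dcs _ lcs S(1)]) (use scs ch_eq in simp)
      have "\<exists>j \<in> J. run r pos S ! j = lul v" using S(4) u0(3) unfolding cs_def by simp
      then show ?thesis using ce S(2,3) by blast
    qed
  qed
qed

lemma final_ex: "\<exists>S. CE r (replicate (lk r) r) S"
proof -
  have "Ex_prop r" using ex_all rV by blast
  moreover have "{..<lk r} \<subseteq> {i. i < length (replicate (lk r) r) \<and> replicate (lk r) r ! i = r}" by auto
  ultimately have "\<exists>S. CE r (replicate (lk r) r) S \<and> True"
    unfolding Ex_prop_def by (metis card_lessThan finite_lessThan order_refl)
  then show ?thesis by blast
qed

lemma cnt_root: "set P \<subseteq> V \<Longrightarrow> cnt r P = length P"
proof -
  assume a: "set P \<subseteq> V"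
  have "cnt r P = (\<Sum>i<length P. 1)" unfolding cnt_def
    by (rule sum.cong) (use a desc_root nth_mem in auto)
  then show ?thesis by simp
qed

lemma final_opt: assumes ce: "CE r (replicate (lk r) r) S"
  shows "cost_optimal V adj wt q r (replicate (lk r) Invoke @ S)"
proof -
  let ?k = "lk r"
  let ?rep = "replicate ?k r"
  let ?S0 = "replicate ?k Invoke @ S"
  have P: "valid_moves adj r ?rep S" "sub r \<subseteq> insert r (visited r ?rep S)" "Claim r (move_cost wt q r ?rep S)"
    using ce_props(1)[OF ce] rV by auto
  have runI: "run r [] (replicate ?k Invoke) = ?rep" using invokes_run[of r "[]"] by simp
  have valid: "valid_moves adj r [] ?S0" unfolding valid_append runI using invokes_valid P(1) by simp
  have k1: "?k \<ge> 1" using lk_pos rV by blast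
  have r_in: "r \<in> visited r ?rep S" using visited_pos[of ?rep r S] k1 by auto
  have vis: "V \<subseteq> visited r [] ?S0" unfolding visited_append runI using P(2) sub_r r_in by auto
  have expl: "explores V adj r ?S0" unfolding explores_def using valid vis by simp
  have costS0: "cost wt q r ?S0 = real ?k * q + move_cost wt q r ?rep S"
    unfolding cost_def move_cost_append runI invokes_cost ..
  show ?thesis unfolding cost_optimal_def
  proof (intro conjI allI impI)
    show "explores V adj r ?S0" by (rule expl)
    fix S' assume e: "explores V adj r S'"
    let ?P = "run r [] S'"
    have lb: "?P \<noteq> []" "set ?P \<subseteq> V"
      "cost wt q r S' \<ge> q * real (length ?P) + (\<Sum>u \<in> V - {r}. w u * g (cnt u ?P))"
      using lower_bound[OF e] by auto
    have cr: "cnt r ?P = length ?P" using cnt_root[OF lb(2)] .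
    have "cnt r ?P \<ge> 1" using cr lb(1) by (cases ?P) auto
    then have "move_cost wt q r ?rep S + real ?k * (q + D r) \<le> In r ?P + real (cnt r ?P) * (q + D r)"
      using P(3) unfolding Claim_def by blast
    moreover have "In r ?P = (\<Sum>u \<in> V - {r}. w u * g (cnt u ?P))" unfolding In_def sub_r ..
    ultimately show "cost wt q r ?S0 \<le> cost wt q r S'" using costS0 lb(3) cr D_r by (simp add: algebra_simps)
  qed
qed

end

theorem theorem2:
  fixes V :: "'v set" and r :: 'v and par :: "'v \<Rightarrow> 'v" and w :: "'v \<Rightarrow> real"
    and q :: real and lk :: "'v \<Rightarrow> nat" and lul :: "'v \<Rightarrow> 'v" and luc :: "'v \<Rightarrow> 'v option"
  assumes tree: "rooted_tree V r par"
    and pos_w: "\<forall>v \<in> V - {r}. w v > 0"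
    and no_single_child: "\<forall>v \<in> V - {r}. card (children V r par v) \<noteq> 1"
    and q_nonneg: "q \<ge> 0"
    and labels: "valid_labels V r par w q lk lul luc"
  shows "(\<exists>S. costexpl V r par w q lk lul luc r (replicate (lk r) r) S) \<and>
         (\<forall>S. costexpl V r par w q lk lul luc r (replicate (lk r) r) S \<longrightarrow>
              cost_optimal V (tadj V r par) (twt r par w) q r (replicate (lk r) Invoke @ S))"
proof -
  interpret lctx V r par w q lk lul luc
    using tree pos_w q_nonneg labels by (unfold_locales) auto
  show ?thesis using final_ex final_opt by blast
qed

end
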